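(* Let $\mathcal H$ be a complex Hilbert space with inner product $\langle\cdot,\cdot\rangle_{\mathcal H}$, let $P$ be a bounded self-adjoint operator on $\mathcal H$, and let $|P|$, $|P|^{1/2}$, $\sigma$, $\pi$ and the forms $\langle\cdot,\cdot\rangle_P$, $[\cdot,\cdot]_P$ on $\mathrm{ran}\,|P|^{1/2}$ be as described in the context. Let $(\mathcal C,[\cdot,\cdot]_{\mathcal C})$ be a complex Hilbert space, let $\Omega$ be a set, and let $(g_z)_{z\in\Omega}$ be a family of bounded linear operators from $\mathcal C$ into $\mathcal H$ whose ranges span a dense subspace of $\mathcal H$. For $h\in\mathrm{ran}\,|P|^{1/2}$ define the function $\widehat{h}:\Omega\to\mathcal C$ by \[ [\widehat{h}(z),\eta]_{\mathcal C}=\langle h,g_z\eta\rangle_{\mathcal H},\qquad z\in\Omega,\ \eta\in\mathcal C . \] Then the set of functions $\{\widehat{|P|^{1/2}f}\,:\,f\in\mathcal H\}$, endowed with the form \[ [\widehat{|P|^{1/2}f},\widehat{|P|^{1/2}g}]_{K}=[|P|^{1/2}f,|P|^{1/2}g]_P,\qquad f,g\in\mathcal H, \] is a reproducing kernel Krein space of $\mathcal C$-valued functions on $\Omega$ whose reproducing kernel is given by \[ K(z,w)\xi=\big(\widehat{P(g_w\xi)}\big)(z),\qquad z,w\in\Omega,\ \xi\in\mathcal C, \] that is, for every $w\in\Omega$ and $\xi\in\mathcal C$ the function $K(\cdot,w)\xi$ belongs to the space and $[F,K(\cdot,w)\xi]_K=[F(w),\xi]_{\mathcal C}$ for every $F$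 in the space.
   Context: For a bounded self-adjoint operator $P$ on a Hilbert space $\mathcal H$: $|P|=(P^2)^{1/2}$ is its absolute value, $|P|^{1/2}$ the unique positive square root of $|P|$, $\sigma$ the sign of $P$ (so that $P=\sigma|P|$, with $\sigma$ obtained by functional calculus and vanishing on $\ker P$), and $\pi$ the orthogonal projection onto $\ker P$. The range $\mathrm{ran}\,|P|^{1/2}$ is endowed with the two forms $\langle |P|^{1/2}f,|P|^{1/2}g\rangle_P=\langle f,(I-\pi)g\rangle_{\mathcal H}$ and $[|P|^{1/2}f,|P|^{1/2}g]_P=\langle \sigma f,(I-\pi)g\rangle_{\mathcal H}$, $f,g\in\mathcal H$. A reproducing kernel Krein space of $\mathcal C$-valued functions on $\Omega$ is a Krein space of such functions with an operator-valued function $K(z,w)$ such that $K(\cdot,w)\xi$ lies in the space and $[F,K(\cdot,w)\xi]=[F(w),\xi]_{\mathcal C}$ for all $F$ in the space, $w\in\Omega$, $\xi\in\mathcal C$. *)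

theory Defs
  imports "HOL-Analysis.Analysis"
begin

class complex_vector = real_vector +
  fixes scaleC :: "complex \<Rightarrow> 'a \<Rightarrow> 'a"
  assumes scaleR_scaleC: "scaleR r x = scaleC (complex_of_real r) x"
    and scaleC_add_right: "scaleC a (x + y) = scaleC a x + scaleC a y"
    and scaleC_add_left: "scaleC (a + b) x = scaleC a x + scaleC b x"
    and scaleC_scaleC: "scaleC a (scaleC b x) = scaleC (a * b) x"
    and scaleC_one: "scaleC 1 x = x"

text \<open>Inner product linear in the first argument, conjugate-linear in the second.\<close>
class complex_inner = complex_vector + real_normed_vector +
  fixes cinner :: "'a \<Rightarrow> 'a \<Rightarrow> complex"
  assumes cinner_commute: "cinner x y = cnj (cinner y x)"
    and cinner_add_left: "cinner (x + y) z = cinner x z + cinner y z"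
    and cinner_scaleC_left: "cinner (scaleC r x) y = r * cinner x y"
    and cinner_ge_zero: "0 \<le> Re (cinner x x)"
    and cinner_eq_zero_iff: "cinner x x = 0 \<longleftrightarrow> x = 0"
    and norm_eq_sqrt_cinner: "norm x = sqrt (Re (cinner x x))"

class chilbert_space = complex_inner + complete_space

definition csubspace :: "'a::complex_vector set \<Rightarrow> bool" where
  "csubspace W \<longleftrightarrow> 0 \<in> W \<and> (\<forall>x\<in>W. \<forall>y\<in>W. x + y \<in> W) \<and> (\<forall>c. \<forall>x\<in>W. scaleC c x \<in> W)"

definition cspan :: "'a::complex_vector set \<Rightarrow> 'a set" where
  "cspan S = \<Inter>{W. csubspace W \<and> S \<subseteq> W}"

definition bounded_clinear :: "('a::complex_inner \<Rightarrow> 'b::complex_inner) \<Rightarrow> bool" where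
  "bounded_clinear f \<longleftrightarrow> bounded_linear f \<and> (\<forall>c x. f (scaleC c x) = scaleC c (f x))"

definition selfadjoint :: "('h::complex_inner \<Rightarrow> 'h) \<Rightarrow> bool" where
  "selfadjoint A \<longleftrightarrow> bounded_clinear A \<and> (\<forall>x y. cinner (A x) y = cinner x (A y))"

definition positive_op :: "('h::complex_inner \<Rightarrow> 'h) \<Rightarrow> bool" where
  "positive_op A \<longleftrightarrow> selfadjoint A \<and> (\<forall>x. 0 \<le> Re (cinner (A x) x))"

definition op_sqrt :: "('h::complex_inner \<Rightarrow> 'h) \<Rightarrow> ('h \<Rightarrow> 'h)" where
  "op_sqrt A = (THE B. positive_op B \<and> B \<circ> B = A)"

definition op_abs :: "('h::complex_inner \<Rightarrow> 'h) \<Rightarrow> ('h \<Rightarrow> 'h)" where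
  "op_abs P = op_sqrt (P \<circ> P)"

definition op_sqrtabs :: "('h::complex_inner \<Rightarrow> 'h) \<Rightarrow> ('h \<Rightarrow> 'h)" where
  "op_sqrtabs P = op_sqrt (op_abs P)"

definition kerproj :: "('h::complex_inner \<Rightarrow> 'h) \<Rightarrow> ('h \<Rightarrow> 'h)" where
  "kerproj P = (THE Q. selfadjoint Q \<and> Q \<circ> Q = Q \<and> range Q = {x. P x = 0})"

text \<open>sigma: the sign of P, i.e. the bounded operator with P = sigma |P| vanishing on ker P
  (this determines the functional-calculus sign uniquely).\<close>
definition opsign :: "('h::complex_inner \<Rightarrow> 'h) \<Rightarrow> ('h \<Rightarrow> 'h)" where
  "opsign P = (THE S. bounded_clinear S \<and> S \<circ> op_abs P = P \<and> (\<forall>x. P x = 0 \<longrightarrow> S x = 0))"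

definition hat :: "('z \<Rightarrow> 'c::complex_inner \<Rightarrow> 'h::complex_inner) \<Rightarrow> 'h \<Rightarrow> 'z \<Rightarrow> 'c" where
  "hat g h = (\<lambda>z. THE c. \<forall>\<eta>. cinner c \<eta> = cinner h (g z \<eta>))"

definition hatspace :: "('z \<Rightarrow> 'c::complex_inner \<Rightarrow> 'h::complex_inner) \<Rightarrow> ('h \<Rightarrow> 'h) \<Rightarrow> ('z \<Rightarrow> 'c) set" where
  "hatspace g P = {hat g (op_sqrtabs P f) | f. True}"

text \<open>[hat(|P|^(1/2) f), hat(|P|^(1/2) g)]_K = [|P|^(1/2) f, |P|^(1/2) g]_P = <sigma f, (I - pi) g>_H\<close>
definition Kform :: "('z \<Rightarrow> 'c::complex_inner \<Rightarrow> 'h::complex_inner) \<Rightarrow> ('h \<Rightarrow> 'h)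
    \<Rightarrow> ('z \<Rightarrow> 'c) \<Rightarrow> ('z \<Rightarrow> 'c) \<Rightarrow> complex" where
  "Kform g P F G =
    (let f = (SOME f. F = hat g (op_sqrtabs P f));
         h = (SOME h. G = hat g (op_sqrtabs P h))
     in cinner (opsign P f) (h - kerproj P h))"

definition fun_csubspace :: "('z \<Rightarrow> 'c::complex_vector) set \<Rightarrow> bool" where
  "fun_csubspace V \<longleftrightarrow> (\<lambda>z. 0) \<in> V \<and> (\<forall>F\<in>V. \<forall>G\<in>V. (\<lambda>z. F z + G z) \<in> V)
     \<and> (\<forall>c. \<forall>F\<in>V. (\<lambda>z. scaleC c (F z)) \<in> V)"

definition fun_hilbert :: "('z \<Rightarrow> 'c::complex_vector) set \<Rightarrow> (('z \<Rightarrow> 'c) \<Rightarrow> ('z \<Rightarrow> 'c) \<Rightarrow> complex) \<Rightarrow> bool" where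
  "fun_hilbert W B \<longleftrightarrow>
     (\<forall>F\<in>W. F \<noteq> (\<lambda>z. 0) \<longrightarrow> 0 < Re (B F F)) \<and>
     (\<forall>s::nat \<Rightarrow> 'z \<Rightarrow> 'c. (\<forall>n. s n \<in> W) \<and>
          (\<forall>e::real>0. \<exists>N. \<forall>m\<ge>N. \<forall>n\<ge>N. Re (B (\<lambda>z. s m z - s n z) (\<lambda>z. s m z - s n z)) < e)
        \<longrightarrow> (\<exists>F\<in>W. \<forall>e::real>0. \<exists>N. \<forall>n\<ge>N. Re (B (\<lambda>z. s n z - F z) (\<lambda>z. s n z - F z)) < e))"

definition fun_krein_space :: "('z \<Rightarrow> 'c::complex_vector) set \<Rightarrow> (('z \<Rightarrow> 'c) \<Rightarrow> ('z \<Rightarrow> 'c) \<Rightarrow> complex) \<Rightarrow> bool" where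
  "fun_krein_space V B \<longleftrightarrow>
     fun_csubspace V \<and>
     (\<forall>F\<in>V. \<forall>G\<in>V. \<forall>H\<in>V. \<forall>a. B (\<lambda>z. scaleC a (F z) + G z) H = a * B F H + B G H) \<and>
     (\<forall>F\<in>V. \<forall>G\<in>V. B F G = cnj (B G F)) \<and>
     (\<exists>Vp Vm. fun_csubspace Vp \<and> fun_csubspace Vm \<and> Vp \<subseteq> V \<and> Vm \<subseteq> V \<and>
        Vp \<inter> Vm = {\<lambda>z. 0} \<and>
        (\<forall>F\<in>V. \<exists>Fp\<in>Vp. \<exists>Fm\<in>Vm. F = (\<lambda>z. Fp z + Fm z)) \<and>
        (\<forall>Fp\<in>Vp. \<forall>Fm\<in>Vm. B Fp Fm = 0) \<and>
        fun_hilbert Vp B \<and> fun_hilbert Vm (\<lambda>F G. - B F G))"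

definition rk_krein_space :: "('z \<Rightarrow> 'c::complex_inner) set \<Rightarrow> (('z \<Rightarrow> 'c) \<Rightarrow> ('z \<Rightarrow> 'c) \<Rightarrow> complex)
    \<Rightarrow> ('z \<Rightarrow> 'z \<Rightarrow> 'c \<Rightarrow> 'c) \<Rightarrow> bool" where
  "rk_krein_space V B K \<longleftrightarrow>
     fun_krein_space V B \<and> (\<forall>z w. bounded_clinear (K z w)) \<and>
     (\<forall>w \<xi>. (\<lambda>z. K z w \<xi>) \<in> V \<and> (\<forall>F\<in>V. B F (\<lambda>z. K z w \<xi>) = cinner (F w) \<xi>))"

end

theory Submission
  imports Defs "HOL-Computational_Algebra.Formal_Power_Series"
begin

section \<open>Basic algebra of complex vector and inner product spaces\<close>

context complex_vector
begin

lemma scaleC_zero_right [simp]: "scaleC a 0 = 0"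
  using scaleC_add_right [of a 0 0] by simp

lemma scaleC_zero_left [simp]: "scaleC 0 x = 0"
  using scaleC_add_left [of 0 0 x] by simp

lemma scaleC_minus_right: "scaleC a (- x) = - scaleC a x"
proof -
  have "scaleC a (- x) + scaleC a x = 0" using scaleC_add_right [of a "- x" x] by simp
  then show ?thesis by (simp add: eq_neg_iff_add_eq_0)
qed

lemma scaleC_minus_left: "scaleC (- a) x = - scaleC a x"
proof -
  have "scaleC (- a) x + scaleC a x = 0" using scaleC_add_left [of "- a" a x] by simp
  then show ?thesis by (simp add: eq_neg_iff_add_eq_0)
qed

lemma scaleC_diff_right: "scaleC a (x - y) = scaleC a x - scaleC a y"
  using scaleC_add_right [of a x "- y"] by (simp add: scaleC_minus_right)

lemma scaleC_diff_left: "scaleC (a - b) x = scaleC a x - scaleC b x"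
  using scaleC_add_left [of a "- b" x] by (simp add: scaleC_minus_left)

lemma scaleC_sum_right: "scaleC a (sum f A) = (\<Sum>i\<in>A. scaleC a (f i))"
  by (induction A rule: infinite_finite_induct) (simp_all add: scaleC_add_right)

lemma scaleC_of_real: "scaleC (complex_of_real r) x = scaleR r x"
  by (simp add: scaleR_scaleC)

lemma scaleC_scaleR_commute: "scaleC a (scaleR r x) = scaleR r (scaleC a x)"
  by (simp add: scaleR_scaleC scaleC_scaleC mult.commute)

lemma scaleC_eq_0_iff: "scaleC a x = 0 \<longleftrightarrow> a = 0 \<or> x = 0"
proof
  assume h: "scaleC a x = 0"
  show "a = 0 \<or> x = 0"
  proof (cases "a = 0")
    case False
    have "scaleC (inverse a) (scaleC a x) = scaleC 1 x" proof -
      have "inverse a * a = 1" using False by simp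
      then show ?thesis by (simp only: scaleC_scaleC)
    qed
    then show ?thesis using h by (simp add: scaleC_one)
  qed simp
qed auto

end

lemma scaleC_one' [simp]: "scaleC 1 x = x" by (rule scaleC_one)

context complex_inner
begin

lemma cinner_add_right: "cinner x (y + z) = cinner x y + cinner x z"
  by (metis cinner_commute cinner_add_left complex_cnj_add)

lemma cinner_scaleC_right: "cinner x (scaleC r y) = cnj r * cinner x y"
  by (metis cinner_commute cinner_scaleC_left complex_cnj_mult complex_cnj_cnj)

lemma cinner_zero_left [simp]: "cinner 0 x = 0"
  using cinner_add_left [of 0 0 x] by simp

lemma cinner_zero_right [simp]: "cinner x 0 = 0"
  using cinner_add_right [of x 0 0] by simp

lemma cinner_minus_left: "cinner (- x) y = - cinner x y"
proof -
  have h: "cinner x y + cinner (- x) y = 0" using cinner_add_left [of x "- x" y] by simp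
  have "cinner (- x) y = (cinner x y + cinner (- x) y) - cinner x y" by simp
  also have "\<dots> = - cinner x y" using h by simp
  finally show ?thesis .
qed

lemma cinner_minus_right: "cinner x (- y) = - cinner x y"
proof -
  have h: "cinner x y + cinner x (- y) = 0" using cinner_add_right [of x y "- y"] by simp
  have "cinner x (- y) = (cinner x y + cinner x (- y)) - cinner x y" by simp
  also have "\<dots> = - cinner x y" using h by simp
  finally show ?thesis .
qed

lemma cinner_diff_left: "cinner (x - y) z = cinner x z - cinner y z"
  using cinner_add_left [of x "- y" z] by (simp add: cinner_minus_left)

lemma cinner_diff_right: "cinner x (y - z) = cinner x y - cinner x z"
  using cinner_add_right [of x y "- z"] by (simp add: cinner_minus_right)

lemma cinner_sum_left: "cinner (sum f A) y = (\<Sum>i\<in>A. cinner (f i) y)"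
  by (induction A rule: infinite_finite_induct) (simp_all add: cinner_add_left)

lemma cinner_sum_right: "cinner y (sum f A) = (\<Sum>i\<in>A. cinner y (f i))"
  by (induction A rule: infinite_finite_induct) (simp_all add: cinner_add_right)

lemma cinner_scaleR_left: "cinner (scaleR r x) y = complex_of_real r * cinner x y"
  by (simp add: scaleR_scaleC cinner_scaleC_left)

lemma cinner_scaleR_right: "cinner x (scaleR r y) = complex_of_real r * cinner x y"
  by (simp add: scaleR_scaleC cinner_scaleC_right)

lemma cinner_self_Im: "Im (cinner x x) = 0"
  using arg_cong [OF cinner_commute [of x x], of Im] by simp

lemma cinner_self: "cinner x x = complex_of_real ((norm x)\<^sup>2)"
proof -
  have "(norm x)\<^sup>2 = Re (cinner x x)" by (simp add: norm_eq_sqrt_cinner cinner_ge_zero)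
  then show ?thesis using cinner_self_Im [of x] by (simp add: complex_eq_iff)
qed

lemma cinner_self_Re: "Re (cinner x x) = (norm x)\<^sup>2"
  by (simp add: cinner_self)

lemma cinner_eq_zero_self: "(\<forall>y. cinner x y = 0) \<Longrightarrow> x = 0"
  using cinner_eq_zero_iff by blast

lemma cinner_ext_left: "(\<And>y. cinner a y = cinner b y) \<Longrightarrow> a = b"
proof -
  assume h: "\<And>y. cinner a y = cinner b y"
  have "cinner (a - b) (a - b) = 0" using h by (simp add: cinner_diff_left)
  then show "a = b" using cinner_eq_zero_iff by simp
qed

lemma cinner_ext_right: "(\<And>y. cinner y a = cinner y b) \<Longrightarrow> a = b"
  by (rule cinner_ext_left) (metis cinner_commute)

lemma norm_scaleC: "norm (scaleC a x) = cmod a * norm x"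
proof -
  have "(norm (scaleC a x))\<^sup>2 = Re (cinner (scaleC a x) (scaleC a x))" by (simp add: cinner_self_Re)
  also have "\<dots> = Re (a * cnj a * cinner x x)"
    by (simp only: cinner_scaleC_left cinner_scaleC_right mult.assoc mult.left_commute)
  also have "\<dots> = Re (complex_of_real ((cmod a)\<^sup>2) * complex_of_real ((norm x)\<^sup>2))"
    by (simp only: complex_norm_square cinner_self)
  also have "\<dots> = (cmod a)\<^sup>2 * (norm x)\<^sup>2"
    by (simp only: Re_complex_of_real flip: of_real_mult)
  finally have "(norm (scaleC a x))\<^sup>2 = (cmod a * norm x)\<^sup>2" by (simp add: power_mult_distrib)
  then show ?thesis by (simp add: power2_eq_iff_nonneg)
qed

lemma cinner_expand_diff_scale:
  "cinner (x - scaleC t y) (x - scaleC t y) =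
     cinner x x - cnj t * cinner x y - t * cinner y x + t * cnj t * cinner y y"
  by (simp add: cinner_diff_left cinner_diff_right cinner_scaleC_left cinner_scaleC_right
      algebra_simps)

lemma pythagoras: "cinner x y = 0 \<Longrightarrow> (norm (x + y))\<^sup>2 = (norm x)\<^sup>2 + (norm y)\<^sup>2"
proof -
  assume h: "cinner x y = 0"
  then have h2: "cinner y x = 0" by (metis cinner_commute complex_cnj_zero)
  have "(norm (x + y))\<^sup>2 = Re (cinner (x+y) (x+y))" by (simp add: cinner_self_Re)
  also have "\<dots> = Re (cinner x x) + Re (cinner y y)"
    using h h2 by (simp add: cinner_add_left cinner_add_right)
  finally show ?thesis by (simp add: cinner_self_Re)
qed

lemma parallelogram:
  "(norm (x + y))\<^sup>2 + (norm (x - y))\<^sup>2 = 2 * (norm x)\<^sup>2 + 2 * (norm y)\<^sup>2"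
proof -
  have e: "cinner (x+y) (x+y) + cinner (x-y) (x-y) = 2 * cinner x x + 2 * cinner y y"
    by (simp add: cinner_add_left cinner_add_right cinner_diff_left cinner_diff_right)
  have "Re (cinner (x+y) (x+y)) + Re (cinner (x-y) (x-y)) = 2 * Re (cinner x x) + 2 * Re (cinner y y)"
    using arg_cong [OF e, of Re] by simp
  then show ?thesis by (simp add: cinner_self_Re)
qed

end


section \<open>Bounded complex-linear maps\<close>

lemma bclD:
  assumes "bounded_clinear f"
  shows bcl_bl: "bounded_linear f" and bcl_scaleC: "f (scaleC c x) = scaleC c (f x)"
  using assms unfolding bounded_clinear_def by auto

lemma bcl_add: "bounded_clinear f \<Longrightarrow> f (x + y) = f x + f y"
  using bcl_bl linear_add bounded_linear.linear by blast

lemma bcl_diff: "bounded_clinear f \<Longrightarrow> f (x - y) = f x - f y"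
  using bcl_bl linear_diff bounded_linear.linear by blast

lemma bcl_minus: "bounded_clinear f \<Longrightarrow> f (- x) = - f x"
  using bcl_bl linear_neg bounded_linear.linear by blast

lemma bcl_zero: "bounded_clinear f \<Longrightarrow> f 0 = 0"
  using bcl_bl linear_0 bounded_linear.linear by blast

lemma bcl_sum: "bounded_clinear f \<Longrightarrow> f (sum g A) = (\<Sum>i\<in>A. f (g i))"
  using bcl_bl linear_sum bounded_linear.linear by blast

lemma bcl_scaleR: "bounded_clinear f \<Longrightarrow> f (scaleR r x) = scaleR r (f x)"
  using bcl_bl linear_scale bounded_linear.linear by blast

lemma bcl_bound: "bounded_clinear f \<Longrightarrow> \<exists>K>0. \<forall>x. norm (f x) \<le> norm x * K"
  using bcl_bl bounded_linear.pos_bounded by blast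

lemma bcl_intro:
  assumes "\<And>x y. f (x + y) = f x + f y" "\<And>c x. f (scaleC c x) = scaleC c (f x)"
    and "\<And>x. norm (f x) \<le> norm x * K"
  shows "bounded_clinear f"
  unfolding bounded_clinear_def
proof (intro conjI allI)
  show "bounded_linear f"
    by (rule bounded_linear_intro [where K = K]) (auto simp: assms scaleR_scaleC)
qed (rule assms(2))

lemma bcl_id: "bounded_clinear (\<lambda>x. x)"
  by (rule bcl_intro [where K = 1]) auto

lemma bcl_id': "bounded_clinear id"
  using bcl_id by (simp add: id_def)

lemma bcl_compose: "bounded_clinear f \<Longrightarrow> bounded_clinear g \<Longrightarrow> bounded_clinear (\<lambda>x. f (g x))"
  unfolding bounded_clinear_def using bounded_linear_compose by auto

lemma bcl_compose': "bounded_clinear f \<Longrightarrow> bounded_clinear g \<Longrightarrow> bounded_clinear (f \<circ> g)"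
  using bcl_compose by (simp add: comp_def)

lemma bcl_add_fun: "bounded_clinear f \<Longrightarrow> bounded_clinear g \<Longrightarrow> bounded_clinear (\<lambda>x. f x + g x)"
  unfolding bounded_clinear_def using bounded_linear_add by (auto simp: scaleC_add_right)

lemma bcl_diff_fun: "bounded_clinear f \<Longrightarrow> bounded_clinear g \<Longrightarrow> bounded_clinear (\<lambda>x. f x - g x)"
  unfolding bounded_clinear_def using bounded_linear_sub by (auto simp: scaleC_diff_right)

lemma bcl_scale_fun: "bounded_clinear f \<Longrightarrow> bounded_clinear (\<lambda>x. scaleC a (f x))"
proof -
  assume f: "bounded_clinear f"
  obtain K where K: "\<And>x. norm (f x) \<le> norm x * K" using bcl_bound [OF f] by blast
  show ?thesis
  proof (rule bcl_intro [where K = "cmod a * K"])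
    fix x y show "scaleC a (f (x + y)) = scaleC a (f x) + scaleC a (f y)"
      by (simp add: bcl_add [OF f] scaleC_add_right)
  next
    fix c x show "scaleC a (f (scaleC c x)) = scaleC c (scaleC a (f x))"
      by (simp add: bcl_scaleC [OF f] scaleC_scaleC mult.commute)
  next
    fix x show "norm (scaleC a (f x)) \<le> norm x * (cmod a * K)"
    proof -
      have "cmod a * norm (f x) \<le> cmod a * (norm x * K)" using K [of x] by (rule mult_left_mono) simp
      then show ?thesis by (simp add: norm_scaleC mult_ac)
    qed
  qed
qed

lemma bcl_scaleR_fun: "bounded_clinear f \<Longrightarrow> bounded_clinear (\<lambda>x. scaleR r (f x))"
  using bcl_scale_fun [of f "complex_of_real r"] by (simp add: scaleC_of_real)

lemma bcl_tendsto: "bounded_clinear f \<Longrightarrow> (g \<longlongrightarrow> l) F \<Longrightarrow> ((\<lambda>n. f (g n)) \<longlongrightarrow> f l) F"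
  using bcl_bl bounded_linear.tendsto by blast

lemma bcl_continuous_on: "bounded_clinear f \<Longrightarrow> continuous_on S f"
  using bcl_bl linear_continuous_on by blast

lemma bcl_suminf: "bounded_clinear f \<Longrightarrow> summable g \<Longrightarrow> f (suminf g) = (\<Sum>n. f (g n))"
  using bcl_bl bounded_linear.suminf by metis

lemma bcl_sums: "bounded_clinear f \<Longrightarrow> g sums l \<Longrightarrow> (\<lambda>n. f (g n)) sums (f l)"
  using bcl_bl bounded_linear.sums by metis

lemma selfadjointD: "selfadjoint A \<Longrightarrow> cinner (A x) y = cinner x (A y)"
  unfolding selfadjoint_def by blast

lemma selfadjoint_bcl: "selfadjoint A \<Longrightarrow> bounded_clinear A"
  unfolding selfadjoint_def by blast

lemma positive_selfadjoint: "positive_op A \<Longrightarrow> selfadjoint A"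
  unfolding positive_op_def by blast

lemma positive_ge: "positive_op A \<Longrightarrow> 0 \<le> Re (cinner (A x) x)"
  unfolding positive_op_def by blast

lemma selfadjoint_real: "selfadjoint A \<Longrightarrow> cinner (A x) x = complex_of_real (Re (cinner (A x) x))"
proof -
  assume a: "selfadjoint A"
  have e: "cinner (A x) x = cnj (cinner (A x) x)"
    using selfadjointD [OF a, of x x] cinner_commute [of x "A x"] by simp
  have "Im (cinner (A x) x) = 0" using arg_cong [OF e, of Im] by simp
  then show ?thesis by (simp add: complex_eq_iff)
qed

lemma selfadjoint_id: "selfadjoint (\<lambda>x::'a::complex_inner. x)"
  unfolding selfadjoint_def using bcl_id by simp

lemma positive_id: "positive_op (\<lambda>x::'a::complex_inner. x)"
  unfolding positive_op_def using selfadjoint_id by (simp add: cinner_ge_zero)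

section \<open>Cauchy--Schwarz\<close>

lemma cinner_expand_op:
  assumes "bounded_clinear C"
  shows "cinner (C (x - scaleC t y)) (x - scaleC t y) =
     cinner (C x) x - cnj t * cinner (C x) y - t * cinner (C y) x + t * cnj t * cinner (C y) y"
  by (simp add: bcl_diff [OF assms] bcl_scaleC [OF assms] cinner_diff_left cinner_diff_right
      cinner_scaleC_left cinner_scaleC_right algebra_simps)

lemma quad_aux:
  fixes a :: complex and p q s :: real
  shows "Re (complex_of_real p - cnj (complex_of_real s * a) * a - complex_of_real s * a * cnj a
      + complex_of_real s * a * cnj (complex_of_real s * a) * complex_of_real q)
    = p - 2 * s * (cmod a)\<^sup>2 + s\<^sup>2 * (cmod a)\<^sup>2 * q"
proof -
  have h: "cmod a * cmod a = Re a * Re a + Im a * Im a"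
    using cmod_power2 [of a] by (simp add: power2_eq_square)
  show ?thesis by (simp add: h algebra_simps power2_eq_square)
qed

lemma positive_cs:
  assumes C: "positive_op C"
  shows "(cmod (cinner (C x) y))\<^sup>2 \<le> Re (cinner (C x) x) * Re (cinner (C y) y)"
proof -
  have sa: "selfadjoint C" using C by (rule positive_selfadjoint)
  have bc: "bounded_clinear C" using sa by (rule selfadjoint_bcl)
  define a where "a = cinner (C x) y"
  define p where "p = Re (cinner (C x) x)"
  define q where "q = Re (cinner (C y) y)"
  have p0: "0 \<le> p" unfolding p_def using C by (rule positive_ge)
  have q0: "0 \<le> q" unfolding q_def using C by (rule positive_ge)
  have cyx: "cinner (C y) x = cnj a"
    unfolding a_def using selfadjointD [OF sa, of y x] cinner_commute [of y "C x"] by simp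
  have px: "cinner (C x) x = complex_of_real p"
    unfolding p_def by (rule selfadjoint_real [OF sa])
  have qy: "cinner (C y) y = complex_of_real q"
    unfolding q_def by (rule selfadjoint_real [OF sa])
  have Q: "0 \<le> p - 2 * s * (cmod a)\<^sup>2 + s\<^sup>2 * (cmod a)\<^sup>2 * q" for s :: real
  proof -
    have "0 \<le> Re (cinner (C (x - scaleC (complex_of_real s * a) y)) (x - scaleC (complex_of_real s * a) y))"
      using C by (rule positive_ge)
    also have "\<dots> = p - 2 * s * (cmod a)\<^sup>2 + s\<^sup>2 * (cmod a)\<^sup>2 * q"
      unfolding cinner_expand_op [OF bc] cyx px qy a_def [symmetric] by (rule quad_aux)
    finally show ?thesis .
  qed
  show ?thesis
  proof (cases "q = 0")
    case True
    show ?thesis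
    proof (cases "a = 0")
      case False
      then have "(cmod a)\<^sup>2 > 0" by simp
      have "0 \<le> p - 2 * ((p + 1) / (2 * (cmod a)\<^sup>2)) * (cmod a)\<^sup>2"
        using Q [of "(p + 1) / (2 * (cmod a)\<^sup>2)"] True by simp
      also have "\<dots> = -1" using \<open>(cmod a)\<^sup>2 > 0\<close> by (simp add: field_simps)
      finally show ?thesis by simp
    qed (use p0 q0 in \<open>simp add: a_def [symmetric] p_def q_def\<close>)
  next
    case False
    then have qp: "q > 0" using q0 by simp
    have "0 \<le> p - 2 * (1 / q) * (cmod a)\<^sup>2 + (1 / q)\<^sup>2 * (cmod a)\<^sup>2 * q" by (rule Q)
    also have "\<dots> = p - (cmod a)\<^sup>2 / q" using qp by (simp add: field_simps power2_eq_square)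
    finally have "(cmod a)\<^sup>2 / q \<le> p" by simp
    then have "(cmod a)\<^sup>2 \<le> p * q" using qp by (simp add: field_simps)
    then show ?thesis by (simp add: a_def p_def q_def)
  qed
qed

lemma cauchy_schwarz: "cmod (cinner x y) \<le> norm x * norm y"
proof -
  have "(cmod (cinner x y))\<^sup>2 \<le> Re (cinner x x) * Re (cinner y y)"
    using positive_cs [OF positive_id, of x y] by simp
  also have "\<dots> = (norm x * norm y)\<^sup>2" by (simp add: cinner_self_Re power_mult_distrib)
  finally show ?thesis by (rule power2_le_imp_le) simp
qed

lemma bounded_bilinear_cinner: "bounded_bilinear (cinner :: 'a::complex_inner \<Rightarrow> 'a \<Rightarrow> complex)"
proof
  fix a a' b b' :: 'a and r :: real
  show "cinner (a + a') b = cinner a b + cinner a' b" by (rule cinner_add_left)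
  show "cinner a (b + b') = cinner a b + cinner a b'" by (rule cinner_add_right)
  show "cinner (r *\<^sub>R a) b = r *\<^sub>R cinner a b" by (simp add: cinner_scaleR_left scaleR_conv_of_real)
  show "cinner a (r *\<^sub>R b) = r *\<^sub>R cinner a b" by (simp add: cinner_scaleR_right scaleR_conv_of_real)
next
  show "\<exists>K. \<forall>a b. norm (cinner a b) \<le> norm a * norm b * K"
    by (rule exI [of _ 1]) (simp add: cauchy_schwarz)
qed

lemma tendsto_cinner [tendsto_intros]:
  "(f \<longlongrightarrow> a) F \<Longrightarrow> (g \<longlongrightarrow> b) F \<Longrightarrow> ((\<lambda>x. cinner (f x) (g x)) \<longlongrightarrow> cinner a b) F"
  by (rule bounded_bilinear.tendsto [OF bounded_bilinear_cinner])

lemma continuous_on_cinner [continuous_intros]: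
  "continuous_on S f \<Longrightarrow> continuous_on S g \<Longrightarrow> continuous_on S (\<lambda>x. cinner (f x) (g x))"
  by (rule bounded_bilinear.continuous_on [OF bounded_bilinear_cinner])

lemma bl_cinner_left: "bounded_linear (\<lambda>x. cinner x y)"
  by (rule bounded_bilinear.bounded_linear_left [OF bounded_bilinear_cinner])

lemma bl_cinner_right: "bounded_linear (\<lambda>y. cinner x y)"
  by (rule bounded_bilinear.bounded_linear_right [OF bounded_bilinear_cinner])

lemma suminf_cinner_left: "summable f \<Longrightarrow> cinner (suminf f) y = (\<Sum>n. cinner (f n) y)"
  using bounded_linear.suminf [OF bl_cinner_left] by metis

lemma suminf_cinner_right: "summable f \<Longrightarrow> cinner y (suminf f) = (\<Sum>n. cinner y (f n))"
  using bounded_linear.suminf [OF bl_cinner_right] by metis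

context chilbert_space
begin
subclass banach ..
end


section \<open>Subspaces and orthogonal projections\<close>

lemma csubspace_0: "csubspace W \<Longrightarrow> 0 \<in> W"
  unfolding csubspace_def by blast

lemma csubspace_add: "csubspace W \<Longrightarrow> x \<in> W \<Longrightarrow> y \<in> W \<Longrightarrow> x + y \<in> W"
  unfolding csubspace_def by blast

lemma csubspace_scaleC: "csubspace W \<Longrightarrow> x \<in> W \<Longrightarrow> scaleC c x \<in> W"
  unfolding csubspace_def by blast

lemma csubspace_scaleR: "csubspace W \<Longrightarrow> x \<in> W \<Longrightarrow> scaleR r x \<in> W"
  unfolding scaleR_scaleC by (rule csubspace_scaleC)

lemma csubspace_minus: "csubspace W \<Longrightarrow> x \<in> W \<Longrightarrow> - x \<in> W"
  using csubspace_scaleC [of W x "-1"] by (simp add: scaleC_minus_left)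

lemma csubspace_diff: "csubspace W \<Longrightarrow> x \<in> W \<Longrightarrow> y \<in> W \<Longrightarrow> x - y \<in> W"
  using csubspace_add [of W x "- y"] csubspace_minus [of W y] by simp

lemma csubspace_ker: "bounded_clinear T \<Longrightarrow> csubspace {x. T x = 0}"
  unfolding csubspace_def by (simp add: bcl_zero bcl_add bcl_scaleC)

lemma closed_ker: "bounded_clinear T \<Longrightarrow> closed {x. T x = 0}"
  by (rule closed_Collect_eq) (simp_all add: bcl_continuous_on)

lemma minimizer_exists:
  fixes x :: "'a::chilbert_space"
  assumes cl: "closed M" and sub: "csubspace M"
  shows "\<exists>p\<in>M. \<forall>m\<in>M. (norm (x - p))\<^sup>2 \<le> (norm (x - m))\<^sup>2"
proof -
  define S where "S = (\<lambda>m. (norm (x - m))\<^sup>2) ` M"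
  define D where "D = Inf S"
  have ne: "S \<noteq> {}" unfolding S_def using csubspace_0 [OF sub] by blast
  have bdd: "bdd_below S" unfolding S_def by (rule bdd_belowI [of _ 0]) auto
  have low: "D \<le> (norm (x - m))\<^sup>2" if "m \<in> M" for m
    unfolding D_def S_def using bdd that by (auto intro: cInf_lower simp: S_def)
  have "\<exists>m. m \<in> M \<and> (norm (x - m))\<^sup>2 < D + inverse (real (Suc n))" for n
  proof -
    have "Inf S < D + inverse (real (Suc n))" unfolding D_def by simp
    from cInf_lessD [OF ne this] show ?thesis unfolding S_def by blast
  qed
  then obtain s where sM: "\<And>n. s n \<in> M" and sD: "\<And>n. (norm (x - s n))\<^sup>2 < D + inverse (real (Suc n))"
    by metis
  have key: "(norm (s n - s k))\<^sup>2 \<le> 2 * inverse (real (Suc n)) + 2 * inverse (real (Suc k))" for n k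
  proof -
    define u where "u = x - s n"
    define v where "v = x - s k"
    define mid where "mid = scaleR (1/2) (s n + s k)"
    have midM: "mid \<in> M" unfolding mid_def using sM sub by (intro csubspace_scaleR csubspace_add)
    have uv: "u + v = scaleR 2 (x - mid)" unfolding u_def v_def mid_def
      by (simp add: algebra_simps scaleR_2)
    have uv2: "u - v = s k - s n" unfolding u_def v_def by simp
    have "(norm (u + v))\<^sup>2 = 4 * (norm (x - mid))\<^sup>2" unfolding uv by (simp add: power_mult_distrib)
    then have "(norm (u + v))\<^sup>2 \<ge> 4 * D" using low [OF midM] by simp
    moreover have "(norm (u + v))\<^sup>2 + (norm (u - v))\<^sup>2 = 2 * (norm u)\<^sup>2 + 2 * (norm v)\<^sup>2"
      by (rule parallelogram)
    moreover have "(norm u)\<^sup>2 < D + inverse (real (Suc n))" unfolding u_def by (rule sD)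
    moreover have "(norm v)\<^sup>2 < D + inverse (real (Suc k))" unfolding v_def by (rule sD)
    ultimately have "(norm (u - v))\<^sup>2 \<le> 2 * inverse (real (Suc n)) + 2 * inverse (real (Suc k))"
      by linarith
    then show ?thesis unfolding uv2 by (simp add: norm_minus_commute)
  qed
  have "Cauchy s"
  proof (rule CauchyI)
    fix e :: real assume e: "0 < e"
    obtain N :: nat where N: "4 / e\<^sup>2 < real N" using reals_Archimedean2 by blast
    have "norm (s m - s n) < e" if "m \<ge> N" "n \<ge> N" for m n
    proof -
      have "inverse (real (Suc m)) \<le> inverse (real (Suc N))" using that by (simp add: field_simps)
      moreover have "inverse (real (Suc n)) \<le> inverse (real (Suc N))" using that by (simp add: field_simps)
      ultimately have "(norm (s m - s n))\<^sup>2 \<le> 4 * inverse (real (Suc N))" using key [of m n] by linarith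
      also have "\<dots> < e\<^sup>2"
      proof -
        have "4 / e\<^sup>2 < real (Suc N)" using N by simp
        then have "4 < e\<^sup>2 * real (Suc N)" using e by (simp add: field_simps)
        then show ?thesis by (simp add: field_simps)
      qed
      finally show ?thesis using e by (simp add: power_less_imp_less_base)
    qed
    then show "\<exists>M. \<forall>m\<ge>M. \<forall>n\<ge>M. norm (s m - s n) < e" by blast
  qed
  then obtain p where lim: "s \<longlonglongrightarrow> p" using Cauchy_convergent convergent_def by blast
  have pM: "p \<in> M" using closed_sequentially [OF cl sM lim] .
  have "(norm (x - p))\<^sup>2 \<le> D"
  proof (rule LIMSEQ_le)
    show "(\<lambda>n. (norm (x - s n))\<^sup>2) \<longlonglongrightarrow> (norm (x - p))\<^sup>2" by (intro tendsto_intros lim)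
    show "(\<lambda>n. D + inverse (real (Suc n))) \<longlonglongrightarrow> D"
      using tendsto_add [OF tendsto_const LIMSEQ_inverse_real_of_nat, of D] by simp
    show "\<exists>N. \<forall>n\<ge>N. (norm (x - s n))\<^sup>2 \<le> D + inverse (real (Suc n))" using sD less_imp_le by blast
  qed
  then have "\<forall>m\<in>M. (norm (x - p))\<^sup>2 \<le> (norm (x - m))\<^sup>2" using low order_trans by blast
  with pM show ?thesis by blast
qed

lemma proj_exists:
  fixes x :: "'a::chilbert_space"
  assumes cl: "closed M" and sub: "csubspace M"
  shows "\<exists>p\<in>M. \<forall>m\<in>M. cinner (x - p) m = 0"
proof -
  obtain p where pM: "p \<in> M" and pmin: "\<And>m. m \<in> M \<Longrightarrow> (norm (x - p))\<^sup>2 \<le> (norm (x - m))\<^sup>2"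
    using minimizer_exists [OF cl sub] by blast
  have "cinner (x - p) m = 0" if mM: "m \<in> M" for m
  proof (rule ccontr)
    assume a0: "cinner (x - p) m \<noteq> 0"
    define u where "u = x - p"
    define a where "a = cinner u m"
    define q where "q = (norm m)\<^sup>2"
    have "m \<noteq> 0" using a0 by auto
    then have q0: "q > 0" unfolding q_def by simp
    define t where "t = complex_of_real (1 / q) * a"
    have "p + scaleC t m \<in> M" using pM mM sub by (intro csubspace_add csubspace_scaleC)
    then have "(norm u)\<^sup>2 \<le> (norm (u - scaleC t m))\<^sup>2" using pmin unfolding u_def by (simp add: diff_diff_eq)
    also have "\<dots> = Re (cinner (u - scaleC t m) (u - scaleC t m))" by (simp add: cinner_self_Re)
    also have "\<dots> = (norm u)\<^sup>2 - 2 * (1/q) * (cmod a)\<^sup>2 + (1/q)\<^sup>2 * (cmod a)\<^sup>2 * q"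
    proof -
      have mu: "cinner m u = cnj a" unfolding a_def by (metis cinner_commute)
      show ?thesis unfolding cinner_expand_diff_scale mu
        unfolding cinner_self [of u] cinner_self [of m] q_def [symmetric] a_def [symmetric] t_def
        by (rule quad_aux)
    qed
    also have "\<dots> = (norm u)\<^sup>2 - (cmod a)\<^sup>2 / q" using q0 by (simp add: field_simps power2_eq_square)
    finally have "(cmod a)\<^sup>2 / q \<le> 0" by simp
    then have "(cmod a)\<^sup>2 \<le> 0" using q0 by (simp add: divide_le_0_iff)
    then have "a = 0" by simp
    then show False using a0 unfolding a_def u_def by simp
  qed
  then show ?thesis using pM by blast
qed

definition orth_proj :: "'a::chilbert_space set \<Rightarrow> 'a \<Rightarrow> 'a" where
  "orth_proj M x = (THE p. p \<in> M \<and> (\<forall>m\<in>M. cinner (x - p) m = 0))"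

lemma proj_unique:
  assumes sub: "csubspace M" and "p \<in> M" "\<forall>m\<in>M. cinner (x - p) m = 0"
    and "q \<in> M" "\<forall>m\<in>M. cinner (x - q) m = 0"
  shows "p = q"
proof -
  have d: "p - q \<in> M" using assms by (intro csubspace_diff) auto
  have "cinner (x - q) (p - q) - cinner (x - p) (p - q) = 0" using assms d by simp
  then have "cinner (p - q) (p - q) = 0" by (simp add: cinner_diff_left)
  then have "p - q = 0" using cinner_eq_zero_iff by blast
  then show ?thesis by simp
qed

locale closed_sub =
  fixes M :: "'a::chilbert_space set"
  assumes cl: "closed M" and sub: "csubspace M"
begin

lemma proj_prop: "orth_proj M x \<in> M \<and> (\<forall>m\<in>M. cinner (x - orth_proj M x) m = 0)"
proof -
  obtain p where p: "p \<in> M \<and> (\<forall>m\<in>M. cinner (x - p) m = 0)" using proj_exists [OF cl sub] by blast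
  have ex1: "\<exists>!p. p \<in> M \<and> (\<forall>m\<in>M. cinner (x - p) m = 0)"
    using p proj_unique [OF sub] by blast
  have "orth_proj M x = p" unfolding orth_proj_def by (rule the1_equality [OF ex1 p])
  then show ?thesis using p by simp
qed

lemma proj_in: "orth_proj M x \<in> M"
  using proj_prop by blast

lemma proj_orth: "m \<in> M \<Longrightarrow> cinner (x - orth_proj M x) m = 0"
  using proj_prop by blast

lemma proj_orth': "m \<in> M \<Longrightarrow> cinner m (x - orth_proj M x) = 0"
  using proj_orth by (metis cinner_commute complex_cnj_zero)

lemma proj_eq: "p \<in> M \<Longrightarrow> (\<And>m. m \<in> M \<Longrightarrow> cinner (x - p) m = 0) \<Longrightarrow> orth_proj M x = p"
  using proj_unique [OF sub] proj_in proj_orth by blast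

lemma proj_id: "x \<in> M \<Longrightarrow> orth_proj M x = x"
  by (rule proj_eq) simp_all

lemma proj_zero_iff: "orth_proj M x = 0 \<longleftrightarrow> (\<forall>m\<in>M. cinner x m = 0)"
proof
  assume h: "orth_proj M x = 0" show "\<forall>m\<in>M. cinner x m = 0"
    using proj_orth [of _ x] unfolding h by simp
next
  assume "\<forall>m\<in>M. cinner x m = 0"
  then show "orth_proj M x = 0" by (intro proj_eq) (simp_all add: csubspace_0 [OF sub])
qed

lemma proj_add: "orth_proj M (x + y) = orth_proj M x + orth_proj M y"
proof (rule proj_eq)
  show "orth_proj M x + orth_proj M y \<in> M" by (rule csubspace_add [OF sub proj_in proj_in])
  fix m assume m: "m \<in> M"
  have e: "x + y - (orth_proj M x + orth_proj M y) = (x - orth_proj M x) + (y - orth_proj M y)" by simp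
  show "cinner (x + y - (orth_proj M x + orth_proj M y)) m = 0"
    unfolding e cinner_add_left proj_orth [OF m] by simp
qed

lemma proj_scaleC: "orth_proj M (scaleC c x) = scaleC c (orth_proj M x)"
proof (rule proj_eq)
  show "scaleC c (orth_proj M x) \<in> M" by (rule csubspace_scaleC [OF sub proj_in])
  fix m assume m: "m \<in> M"
  have e: "scaleC c x - scaleC c (orth_proj M x) = scaleC c (x - orth_proj M x)" by (simp add: scaleC_diff_right)
  show "cinner (scaleC c x - scaleC c (orth_proj M x)) m = 0"
    unfolding e cinner_scaleC_left proj_orth [OF m] by simp
qed

lemma proj_norm: "norm (orth_proj M x) \<le> norm x"
proof -
  have "cinner (orth_proj M x) (x - orth_proj M x) = 0" using proj_orth' proj_in by blast
  then have "(norm (orth_proj M x + (x - orth_proj M x)))\<^sup>2 = (norm (orth_proj M x))\<^sup>2 + (norm (x - orth_proj M x))\<^sup>2"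
    by (rule pythagoras)
  then have "(norm (orth_proj M x))\<^sup>2 \<le> (norm x)\<^sup>2" by simp
  then show ?thesis by (rule power2_le_imp_le) simp
qed

lemma proj_bcl: "bounded_clinear (orth_proj M)"
  by (rule bcl_intro [where K = 1]) (simp_all add: proj_add proj_scaleC proj_norm)

lemma proj_sa: "selfadjoint (orth_proj M)"
  unfolding selfadjoint_def
proof (intro conjI allI proj_bcl)
  fix x y
  have "cinner (orth_proj M x) (y - orth_proj M y) = 0" by (rule proj_orth' [OF proj_in])
  moreover have "cinner (x - orth_proj M x) (orth_proj M y) = 0" by (rule proj_orth [OF proj_in])
  ultimately show "cinner (orth_proj M x) y = cinner x (orth_proj M y)"
    by (simp add: cinner_diff_left cinner_diff_right)
qed

lemma proj_idem: "orth_proj M (orth_proj M x) = orth_proj M x"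
  by (rule proj_id [OF proj_in])

lemma proj_range: "range (orth_proj M) = M"
  using proj_in proj_id by (metis image_subsetI subsetI subset_antisym rangeI)

end

lemma closed_sub_ker: "bounded_clinear T \<Longrightarrow> closed_sub {x. T x = 0}"
  unfolding closed_sub_def using closed_ker csubspace_ker by blast

lemma sa_idem_unique:
  assumes "selfadjoint Q1" "Q1 \<circ> Q1 = Q1" "selfadjoint Q2" "Q2 \<circ> Q2 = Q2" "range Q1 = range Q2"
  shows "Q1 = Q2"
proof -
  have fix1: "Q1 y = y" if "y \<in> range Q1" for y
    using that assms(2) by (metis comp_apply rangeE)
  have fix2: "Q2 y = y" if "y \<in> range Q2" for y
    using that assms(4) by (metis comp_apply rangeE)
  have a: "Q1 (Q2 x) = Q2 x" for x using fix1 assms(5) by simp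
  have b: "Q2 (Q1 x) = Q1 x" for x using fix2 assms(5) by (metis rangeI)
  show ?thesis
  proof
    fix x
    show "Q1 x = Q2 x"
    proof (rule cinner_ext_left)
      fix y
      have "cinner (Q1 x) y = cinner (Q2 (Q1 x)) y" by (simp add: b)
      also have "\<dots> = cinner x (Q1 (Q2 y))" using selfadjointD [OF assms(3)] selfadjointD [OF assms(1)] by simp
      also have "\<dots> = cinner x (Q2 y)" by (simp add: a)
      also have "\<dots> = cinner (Q2 x) y" using selfadjointD [OF assms(3)] by simp
      finally show "cinner (Q1 x) y = cinner (Q2 x) y" .
    qed
  qed
qed


section \<open>Riesz representation and the hat transform\<close>

lemma riesz:
  fixes \<phi> :: "'c::chilbert_space \<Rightarrow> complex"
  assumes bl: "bounded_linear \<phi>" and cl: "\<And>a x. \<phi> (scaleC a x) = a * \<phi> x"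
  shows "\<exists>c. \<forall>x. \<phi> x = cinner x c"
proof (cases "\<forall>x. \<phi> x = 0")
  case True
  then show ?thesis by (intro exI [of _ 0]) simp
next
  case False
  then obtain y where y: "\<phi> y \<noteq> 0" by blast
  define N where "N = {x. \<phi> x = 0}"
  have lin: "linear \<phi>" using bl bounded_linear.linear by blast
  have subN: "csubspace N" unfolding N_def csubspace_def
    by (simp add: linear_0 [OF lin] linear_add [OF lin] cl)
  have clN: "closed N" unfolding N_def
    by (rule closed_Collect_eq) (simp_all add: linear_continuous_on bl)
  interpret N: closed_sub N using subN clN by unfold_locales
  define u where "u = y - orth_proj N y"
  have "\<phi> (orth_proj N y) = 0" using N.proj_in unfolding N_def by blast
  then have phiu: "\<phi> u = \<phi> y" unfolding u_def by (simp add: linear_diff [OF lin])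
  then have u0: "u \<noteq> 0" using y linear_0 [OF lin] by auto
  have uu: "cinner u u \<noteq> 0" using u0 cinner_eq_zero_iff by blast
  have orth: "cinner m u = 0" if "m \<in> N" for m unfolding u_def using N.proj_orth' [OF that] .
  define c where "c = scaleC (cnj (\<phi> u / cinner u u)) u"
  have "\<phi> x = cinner x c" for x
  proof -
    define w where "w = x - scaleC (\<phi> x / \<phi> u) u"
    have "\<phi> w = \<phi> x - (\<phi> x / \<phi> u) * \<phi> u" unfolding w_def by (simp add: linear_diff [OF lin] cl)
    also have "\<dots> = 0" using y phiu by simp
    finally have "w \<in> N" unfolding N_def by simp
    then have "cinner w u = 0" by (rule orth)
    then have xu: "cinner x u = (\<phi> x / \<phi> u) * cinner u u"
      unfolding w_def by (simp add: cinner_diff_left cinner_scaleC_left)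
    have "cinner x c = (\<phi> u / cinner u u) * cinner x u" unfolding c_def by (simp add: cinner_scaleC_right)
    also have "\<dots> = \<phi> x" unfolding xu using uu y phiu by (simp add: field_simps)
    finally show ?thesis by simp
  qed
  then show ?thesis by blast
qed

lemma adjoint_vec_exists:
  fixes G :: "'c::chilbert_space \<Rightarrow> 'h::complex_inner"
  assumes G: "bounded_clinear G"
  shows "\<exists>!c. \<forall>\<eta>. cinner c \<eta> = cinner h (G \<eta>)"
proof -
  define \<phi> where "\<phi> = (\<lambda>\<eta>. cinner (G \<eta>) h)"
  have bl: "bounded_linear \<phi>" unfolding \<phi>_def
    using bounded_linear_compose [OF bl_cinner_left bcl_bl [OF G]] by simp
  have "\<phi> (scaleC a x) = a * \<phi> x" for a x unfolding \<phi>_def by (simp add: bcl_scaleC [OF G] cinner_scaleC_left)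
  then obtain c0 where c0: "\<And>x. \<phi> x = cinner x c0" using riesz [OF bl] by blast
  have ex: "\<forall>\<eta>. cinner c0 \<eta> = cinner h (G \<eta>)"
  proof
    fix \<eta>
    have "cinner c0 \<eta> = cnj (cinner \<eta> c0)" by (rule cinner_commute)
    also have "\<dots> = cnj (cinner (G \<eta>) h)" using c0 [of \<eta>] unfolding \<phi>_def by simp
    also have "\<dots> = cinner h (G \<eta>)" by (metis cinner_commute)
    finally show "cinner c0 \<eta> = cinner h (G \<eta>)" .
  qed
  show ?thesis
  proof (rule ex1I [of _ c0])
    show "\<forall>\<eta>. cinner c0 \<eta> = cinner h (G \<eta>)" by (rule ex)
    fix c assume "\<forall>\<eta>. cinner c \<eta> = cinner h (G \<eta>)"
    then show "c = c0" using ex by (intro cinner_ext_left) simp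
  qed
qed

lemma hat_char:
  fixes g :: "'z \<Rightarrow> 'c::chilbert_space \<Rightarrow> 'h::complex_inner"
  assumes "bounded_clinear (g z)"
  shows "cinner (hat g h z) \<eta> = cinner h (g z \<eta>)"
proof -
  have "\<forall>\<eta>. cinner (hat g h z) \<eta> = cinner h (g z \<eta>)"
    unfolding hat_def using theI' [OF adjoint_vec_exists [OF assms, of h]] by simp
  then show ?thesis by blast
qed

lemma hat_eqI:
  fixes g :: "'z \<Rightarrow> 'c::chilbert_space \<Rightarrow> 'h::complex_inner"
  assumes "bounded_clinear (g z)" "\<And>\<eta>. cinner c \<eta> = cinner h (g z \<eta>)"
  shows "hat g h z = c"
  by (rule cinner_ext_left) (simp add: hat_char [of g z, OF assms(1)] assms(2))

locale gfam =
  fixes g :: "'z \<Rightarrow> 'c::chilbert_space \<Rightarrow> 'h::chilbert_space"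
  assumes gbcl: "\<And>z. bounded_clinear (g z)"
begin

lemma hatc: "cinner (hat g h z) \<eta> = cinner h (g z \<eta>)"
  by (rule hat_char [of g z, OF gbcl])

lemma hat_add: "hat g (h1 + h2) = (\<lambda>z. hat g h1 z + hat g h2 z)"
proof (rule ext)
  fix z show "hat g (h1 + h2) z = hat g h1 z + hat g h2 z"
    by (rule hat_eqI [of g z, OF gbcl]) (simp add: cinner_add_left hatc)
qed

lemma hat_diff: "hat g (h1 - h2) = (\<lambda>z. hat g h1 z - hat g h2 z)"
proof (rule ext)
  fix z show "hat g (h1 - h2) z = hat g h1 z - hat g h2 z"
    by (rule hat_eqI [of g z, OF gbcl]) (simp add: cinner_diff_left hatc)
qed

lemma hat_scaleC: "hat g (scaleC a h) = (\<lambda>z. scaleC a (hat g h z))"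
proof (rule ext)
  fix z show "hat g (scaleC a h) z = scaleC a (hat g h z)"
    by (rule hat_eqI [of g z, OF gbcl]) (simp add: cinner_scaleC_left hatc)
qed

lemma hat_zero: "hat g 0 = (\<lambda>z. 0)"
proof (rule ext)
  fix z show "hat g 0 z = 0"
    by (rule hat_eqI [of g z, OF gbcl]) simp
qed

lemma hat_norm:
  obtains K where "K > 0" "\<And>h. norm (hat g h z) \<le> K * norm h"
proof -
  obtain K where K: "K > 0" "\<And>x. norm (g z x) \<le> norm x * K" using bcl_bound [OF gbcl] by blast
  have "norm (hat g h z) \<le> K * norm h" for h
  proof -
    define c where "c = hat g h z"
    have "(norm c)\<^sup>2 = Re (cinner c c)" by (simp add: cinner_self_Re)
    also have "\<dots> = Re (cinner h (g z c))" unfolding c_def by (simp add: hatc)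
    also have "\<dots> \<le> cmod (cinner h (g z c))" by (rule complex_Re_le_cmod)
    also have "\<dots> \<le> norm h * norm (g z c)" by (rule cauchy_schwarz)
    also have "\<dots> \<le> norm h * (norm c * K)" using K(2) by (simp add: mult_left_mono)
    finally have "norm c * norm c \<le> (K * norm h) * norm c" by (simp add: power2_eq_square mult_ac)
    then show ?thesis unfolding c_def[symmetric]
      using K(1) by (cases "norm c = 0") (auto simp: mult_le_cancel_right)
  qed
  then show ?thesis using K(1) that by blast
qed

lemma hat_kernel_bcl:
  assumes "bounded_clinear T"
  shows "bounded_clinear (\<lambda>\<xi>. hat g (T (g w \<xi>)) z)"
proof -
  obtain K where K: "K > 0" "\<And>h. norm (hat g h z) \<le> K * norm h" using hat_norm by blast
  have bc: "bounded_clinear (\<lambda>\<xi>. T (g w \<xi>))" using bcl_compose [OF assms gbcl] .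
  obtain L where L: "\<And>x. norm (T (g w x)) \<le> norm x * L" using bcl_bound [OF bc] by blast
  show ?thesis
  proof (rule bcl_intro [where K = "K * L"])
    fix x y show "hat g (T (g w (x + y))) z = hat g (T (g w x)) z + hat g (T (g w y)) z"
      by (simp add: bcl_add [OF bc] hat_add)
  next
    fix c x show "hat g (T (g w (scaleC c x))) z = scaleC c (hat g (T (g w x)) z)"
      by (simp add: bcl_scaleC [OF bc] hat_scaleC)
  next
    fix x
    have "norm (hat g (T (g w x)) z) \<le> K * norm (T (g w x))" by (rule K(2))
    also have "\<dots> \<le> K * (norm x * L)" using K(1) L by (simp add: mult_left_mono)
    finally show "norm (hat g (T (g w x)) z) \<le> norm x * (K * L)" by (simp add: mult_ac)
  qed
qed

lemma hat_inj:
  assumes dense: "closure (cspan (\<Union>z. range (g z))) = UNIV"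
    and eq: "hat g h1 = hat g h2"
  shows "h1 = h2"
proof -
  define d where "d = h1 - h2"
  have hd: "hat g d = (\<lambda>z. 0)" unfolding d_def hat_diff eq by simp
  define W where "W = {v. cinner d v = 0}"
  have subW: "csubspace W" unfolding W_def csubspace_def
    by (simp add: cinner_add_right cinner_scaleC_right)
  have inW: "(\<Union>z. range (g z)) \<subseteq> W"
  proof
    fix v assume "v \<in> (\<Union>z. range (g z))"
    then obtain z \<eta> where v: "v = g z \<eta>" by blast
    have "cinner d (g z \<eta>) = cinner (hat g d z) \<eta>" by (simp add: hatc)
    then show "v \<in> W" unfolding W_def v hd by simp
  qed
  have "cspan (\<Union>z. range (g z)) \<subseteq> W" unfolding cspan_def using subW inW by blast
  moreover have "closed W" unfolding W_def
    by (rule closed_Collect_eq) (simp_all add: linear_continuous_on bl_cinner_right)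
  ultimately have "closure (cspan (\<Union>z. range (g z))) \<subseteq> W" by (rule closure_minimal)
  then have "d \<in> W" using dense by blast
  then have "d = 0" unfolding W_def using cinner_eq_zero_iff by blast
  then show ?thesis unfolding d_def by simp
qed

end


section \<open>Coefficients of the square root series\<close>

definition ce :: "nat \<Rightarrow> real" where "ce n = (-1) ^ n * ((1/2::real) gchoose n)"
definition sc :: "nat \<Rightarrow> real" where "sc n = (if n = 0 then 0 else - ce n)"

lemma ce_0 [simp]: "ce 0 = 1" by (simp add: ce_def)
lemma ce_1 [simp]: "ce 1 = -1/2" by (simp add: ce_def)
lemma sc_0 [simp]: "sc 0 = 0" by (simp add: sc_def)

lemma one_gchoose: "(1::real) gchoose k = (if k = 0 then 1 else if k = 1 then 1 else 0)"
proof -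
  have "(1::real) gchoose k = of_nat (1 choose k)" using binomial_gbinomial [of 1 k, where 'a=real] by (metis of_nat_1)
  then show ?thesis by (cases k) (auto simp: binomial_eq_0)
qed

lemma ce_conv: "(\<Sum>i\<le>k. ce i * ce (k - i)) = (if k = 0 then 1 else if k = 1 then -1 else 0)"
proof -
  have "(\<Sum>i\<le>k. ce i * ce (k - i)) = (\<Sum>i\<le>k. (-1) ^ k * (((1/2::real) gchoose i) * ((1/2) gchoose (k - i))))"
  proof (rule sum.cong)
    fix i assume "i \<in> {..k}"
    then have "(-1::real) ^ i * (-1) ^ (k - i) = (-1) ^ k" by (simp flip: power_add)
    then show "ce i * ce (k - i) = (-1) ^ k * (((1/2::real) gchoose i) * ((1/2) gchoose (k - i)))"
      unfolding ce_def by (metis (no_types, lifting) mult.assoc mult.left_commute)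
  qed simp
  also have "\<dots> = (-1) ^ k * (\<Sum>i\<le>k. ((1/2::real) gchoose i) * ((1/2) gchoose (k - i)))"
    by (simp add: sum_distrib_left)
  also have "(\<Sum>i\<le>k. ((1/2::real) gchoose i) * ((1/2) gchoose (k - i))) = (1::real) gchoose k"
    using gbinomial_Vandermonde [of "1/2::real" "1/2" k] by (simp add: atLeast0AtMost)
  finally show ?thesis by (simp add: one_gchoose)
qed

lemma ce_Suc: "ce (Suc k) = ce k * ((real k - 1/2) / (real k + 1))"
proof -
  have "(1/2::real) * ((1/2) gchoose k) = real k * ((1/2) gchoose k) + real (Suc k) * ((1/2) gchoose (Suc k))"
    by (rule gbinomial_mult_1)
  then have e: "((1/2::real) gchoose (Suc k)) = ((1/2) - real k) / (real k + 1) * ((1/2) gchoose k)"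
    by (simp add: field_simps)
  show ?thesis unfolding ce_def power_Suc e by (simp add: field_simps)
qed

lemma ce_nonpos: "k \<ge> 1 \<Longrightarrow> ce k \<le> 0"
proof (induction k rule: nat_induct_at_least)
  case base then show ?case by (simp add: ce_def)
next
  case (Suc n)
  have "(real n - 1/2) / (real n + 1) \<ge> 0" using Suc.hyps by simp
  then show ?case unfolding ce_Suc using Suc.IH by (metis mult_nonpos_nonneg)
qed

lemma sc_nonneg: "0 \<le> sc n"
  unfolding sc_def using ce_nonpos [of n] by simp

lemma sc_conv: "(\<Sum>i\<le>k. sc i * sc (k - i)) = 2 * sc k - (if k = 1 then 1 else 0)"
proof -
  define d :: "nat \<Rightarrow> real" where "d i = (if i = 0 then 1 else 0)" for i
  have scd: "sc i = d i - ce i" for i unfolding sc_def d_def by simp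
  have "(\<Sum>i\<le>k. sc i * sc (k - i)) =
      (\<Sum>i\<le>k. d i * d (k - i)) - (\<Sum>i\<le>k. d i * ce (k - i)) - (\<Sum>i\<le>k. ce i * d (k - i))
      + (\<Sum>i\<le>k. ce i * ce (k - i))"
    unfolding scd by (simp add: algebra_simps sum.distrib sum_subtractf)
  also have "(\<Sum>i\<le>k. d i * d (k - i)) = d k"
    by (simp add: d_def if_distrib [of "\<lambda>x. x * _"] cong: if_cong)
  also have "(\<Sum>i\<le>k. d i * ce (k - i)) = ce k"
  proof -
    have "(\<Sum>i\<le>k. d i * ce (k - i)) = (\<Sum>i\<le>k. if i = 0 then ce (k - i) else 0)"
      by (rule sum.cong) (auto simp: d_def)
    also have "\<dots> = ce k" by (simp add: sum.delta)
    finally show ?thesis .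
  qed
  also have "(\<Sum>i\<le>k. ce i * d (k - i)) = ce k"
  proof -
    have "(\<Sum>i\<le>k. ce i * d (k - i)) = (\<Sum>i\<le>k. if i = k then ce i else 0)"
      by (rule sum.cong) (auto simp: d_def)
    also have "\<dots> = ce k" by (simp add: sum.delta)
    finally show ?thesis .
  qed
  finally show ?thesis unfolding ce_conv by (simp add: sc_def d_def)
qed

lemma sc_partial_le: "(\<Sum>n<N. sc n) \<le> 1"
proof (induction N)
  case 0 then show ?case by simp
next
  case (Suc N)
  define S where "S = (\<Sum>n<Suc N. sc n)"
  define S0 where "S0 = (\<Sum>n<N. sc n)"
  have S00: "0 \<le> S0" unfolding S0_def by (simp add: sum_nonneg sc_nonneg)
  have S01: "S0 \<le> 1" using Suc.IH unfolding S0_def .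
  show ?case
  proof (cases N)
    case 0 then show ?thesis by simp
  next
    case (Suc M)
    define f where "f = (\<lambda>(i::nat, j::nat). sc i * sc j)"
    have f0: "f p \<ge> 0" for p unfolding f_def by (cases p) (simp add: sc_nonneg)
    have "(\<Sum>k\<le>N. (2 * sc k - (if k = 1 then 1 else 0))) = (\<Sum>k\<le>N. \<Sum>i\<le>k. sc i * sc (k - i))"
      by (simp add: sc_conv)
    also have "\<dots> = sum f {(i,j). i + j \<le> N}"
      unfolding f_def by (rule sum.triangle_reindex_eq [symmetric])
    also have "\<dots> = sum f ({(i,j). i + j \<le> N} \<inter> ({..<N} \<times> {..<N}))"
    proof (rule sum.mono_neutral_right)
      show "finite {(i, j). i + j \<le> N}"
        by (rule finite_subset [of _ "{..N} \<times> {..N}"]) auto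
      show "{(i, j). i + j \<le> N} \<inter> {..<N} \<times> {..<N} \<subseteq> {(i, j). i + j \<le> N}" by blast
      have z: "f (i, j) = 0" if "i + j \<le> N" "\<not> (i < N \<and> j < N)" for i j
      proof -
        have "i = 0 \<or> j = 0" using that by linarith
        then show ?thesis unfolding f_def by auto
      qed
      show "\<forall>p\<in>{(i, j). i + j \<le> N} - {(i, j). i + j \<le> N} \<inter> {..<N} \<times> {..<N}. f p = 0"
        using z by auto
    qed
    also have "\<dots> \<le> sum f ({..<N} \<times> {..<N})"
      by (rule sum_mono2) (auto simp: f0)
    also have "\<dots> = S0 * S0" unfolding f_def S0_def by (simp add: sum_product sum.cartesian_product)
    also have "\<dots> \<le> 1" using S00 S01 by (simp add: mult_le_one)
    finally have h: "(\<Sum>k\<le>N. (2 * sc k - (if k = 1 then 1 else 0))) \<le> 1" .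
    have "(\<Sum>k\<le>N. (2 * sc k - (if k = 1 then 1 else 0))) = 2 * S - 1"
      using Suc by (simp add: sum_subtractf sum_distrib_left S_def lessThan_Suc_atMost)
    then show ?thesis using h unfolding S_def by simp
  qed
qed

lemma sc_summable: "summable sc"
  by (rule summableI_nonneg_bounded [where x = 1]) (simp_all add: sc_nonneg sc_partial_le)

lemma sc_suminf: "suminf sc = 1"
proof -
  define s where "s = suminf sc"
  have s1: "s \<le> 1" unfolding s_def by (rule suminf_le_const [OF sc_summable sc_partial_le])
  have ns: "summable (\<lambda>k. norm (sc k))" using sc_summable by (simp add: sc_nonneg)
  have "s * s = (\<Sum>k. \<Sum>i\<le>k. sc i * sc (k - i))" unfolding s_def by (rule Cauchy_product [OF ns ns])
  also have "\<dots> = (\<Sum>k. 2 * sc k - (if k = 1 then 1 else 0))" by (simp add: sc_conv)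
  also have "\<dots> = 2 * s - 1"
  proof -
    have "(\<lambda>k. 2 * sc k) sums (2 * s)" unfolding s_def using sc_summable
      by (intro sums_mult summable_sums)
    moreover have "(\<lambda>k::nat. if k = 1 then 1 else 0 :: real) sums 1"
      using sums_single [of 1 "\<lambda>_. 1::real"] by simp
    ultimately have "(\<lambda>k. 2 * sc k - (if k = 1 then 1 else 0)) sums (2 * s - 1)" by (rule sums_diff)
    then show ?thesis by (rule sums_unique [symmetric])
  qed
  finally have "(s - 1)\<^sup>2 = 0" by (simp add: power2_eq_square algebra_simps)
  then show ?thesis unfolding s_def by simp
qed


section \<open>Square roots of positive operators\<close>

lemma bl_scaleC: "bounded_linear (scaleC c :: 'a::complex_inner \<Rightarrow> 'a)"
  using bcl_bl [OF bcl_scale_fun [OF bcl_id, of c]] by simp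

lemma suminf_scaleC: "summable (f :: nat \<Rightarrow> 'a::{complex_inner,banach}) \<Longrightarrow> scaleC c (suminf f) = (\<Sum>n. scaleC c (f n))"
  using bounded_linear.suminf [OF bl_scaleC] by metis

lemma pos_zero:
  assumes C: "positive_op C" and z: "Re (cinner (C v) v) = 0"
  shows "C v = 0"
proof -
  have "cinner (C v) w = 0" for w
    using positive_cs [OF C, of v w] z by simp
  then show ?thesis using cinner_eq_zero_iff by blast
qed

definition Bop :: "('h::complex_inner \<Rightarrow> 'h) \<Rightarrow> 'h \<Rightarrow> 'h" where "Bop A1 = (\<lambda>x. x - A1 x)"
definition Bn :: "('h::complex_inner \<Rightarrow> 'h) \<Rightarrow> nat \<Rightarrow> 'h \<Rightarrow> 'h" where "Bn A1 n = Bop A1 ^^ n"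
definition Tpart :: "('h::complex_inner \<Rightarrow> 'h) \<Rightarrow> nat \<Rightarrow> 'h \<Rightarrow> 'h" where
  "Tpart A1 N x = (\<Sum>n<N. scaleR (sc n) (Bn A1 n x))"
definition Tser :: "('h::chilbert_space \<Rightarrow> 'h) \<Rightarrow> 'h \<Rightarrow> 'h" where
  "Tser A1 x = (\<Sum>n. scaleR (sc n) (Bn A1 n x))"
definition Sroot :: "('h::chilbert_space \<Rightarrow> 'h) \<Rightarrow> 'h \<Rightarrow> 'h" where
  "Sroot A1 x = x - Tser A1 x"

lemma Bn_0 [simp]: "Bn A1 0 x = x" by (simp add: Bn_def)
lemma Bn_Suc: "Bn A1 (Suc n) x = Bop A1 (Bn A1 n x)" by (simp add: Bn_def)
lemma Bn_Suc': "Bn A1 (Suc n) x = Bn A1 n (Bop A1 x)" by (simp add: Bn_def funpow_swap1)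
lemma Bn_add: "Bn A1 (n + m) x = Bn A1 n (Bn A1 m x)" by (simp add: Bn_def funpow_add)
lemma Bn_1: "Bn A1 1 x = Bop A1 x" by (simp add: Bn_def)

locale contr_pos =
  fixes A1 :: "'h::chilbert_space \<Rightarrow> 'h"
  assumes pos: "positive_op A1" and contr: "\<And>x. norm (A1 x) \<le> norm x"
begin

lemma sa: "selfadjoint A1" using pos by (rule positive_selfadjoint)
lemma bc: "bounded_clinear A1" using sa by (rule selfadjoint_bcl)

lemma a1_sq: "(norm (A1 x))\<^sup>2 \<le> Re (cinner (A1 x) x)"
proof -
  define y where "y = A1 x"
  define n where "n = norm y"
  have px: "0 \<le> Re (cinner (A1 x) x)" using pos by (rule positive_ge)
  have "(cmod (cinner (A1 x) y))\<^sup>2 \<le> Re (cinner (A1 x) x) * Re (cinner (A1 y) y)"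
    by (rule positive_cs [OF pos])
  moreover have "cmod (cinner (A1 x) y) = n\<^sup>2" unfolding y_def n_def
    by (simp add: cinner_self norm_power flip: of_real_power)
  moreover have "Re (cinner (A1 y) y) \<le> n\<^sup>2"
  proof -
    have "Re (cinner (A1 y) y) \<le> cmod (cinner (A1 y) y)" by (rule complex_Re_le_cmod)
    also have "\<dots> \<le> norm (A1 y) * norm y" by (rule cauchy_schwarz)
    also have "\<dots> \<le> norm y * norm y" using contr by (simp add: mult_right_mono)
    finally show ?thesis unfolding n_def by (simp add: power2_eq_square)
  qed
  ultimately have "(n\<^sup>2)\<^sup>2 \<le> Re (cinner (A1 x) x) * n\<^sup>2"
    using px by (metis mult_left_mono order_trans)
  then have h: "n\<^sup>2 * n\<^sup>2 \<le> Re (cinner (A1 x) x) * n\<^sup>2" by (simp only: power2_eq_square)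
  have "n\<^sup>2 \<le> Re (cinner (A1 x) x)"
  proof (cases "n = 0")
    case True then show ?thesis using px by simp
  next
    case False then have "0 < n\<^sup>2" by simp
    then show ?thesis using mult_right_le_imp_le [OF h] by blast
  qed
  then show ?thesis unfolding n_def y_def .
qed

lemma B_bcl: "bounded_clinear (Bop A1)"
  unfolding Bop_def by (rule bcl_diff_fun [OF bcl_id bc])

lemma B_sa: "selfadjoint (Bop A1)"
  unfolding selfadjoint_def using B_bcl
  by (simp add: Bop_def cinner_diff_left cinner_diff_right selfadjointD [OF sa])

lemma B_norm: "norm (Bop A1 x) \<le> norm x"
proof -
  have r: "Re (cinner x (A1 x)) = Re (cinner (A1 x) x)" using arg_cong [OF cinner_commute [of x "A1 x"], of Re] by simp
  have "(norm (Bop A1 x))\<^sup>2 = Re (cinner (x - A1 x) (x - A1 x))" unfolding Bop_def by (simp add: cinner_self_Re)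
  also have "\<dots> = (norm x)\<^sup>2 - 2 * Re (cinner (A1 x) x) + (norm (A1 x))\<^sup>2"
    by (simp add: cinner_diff_left cinner_diff_right r cinner_self_Re)
  also have "\<dots> \<le> (norm x)\<^sup>2" using a1_sq [of x] positive_ge [OF pos, of x] by simp
  finally show ?thesis by (rule power2_le_imp_le) simp
qed

lemma Bn_bcl: "bounded_clinear (Bn A1 n)"
proof (induction n)
  case 0 then show ?case using bcl_id by (simp add: Bn_def)
next
  case (Suc n)
  have "Bn A1 (Suc n) = (\<lambda>x. Bop A1 (Bn A1 n x))" by (simp add: Bn_Suc fun_eq_iff)
  then show ?case using bcl_compose [OF B_bcl Suc.IH] by simp
qed

lemma Bn_sa: "cinner (Bn A1 n x) y = cinner x (Bn A1 n y)"
proof (induction n arbitrary: x y)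
  case 0 then show ?case by simp
next
  case (Suc n)
  have "cinner (Bn A1 (Suc n) x) y = cinner (Bn A1 n x) (Bop A1 y)"
    by (simp add: Bn_Suc selfadjointD [OF B_sa])
  also have "\<dots> = cinner x (Bn A1 (Suc n) y)" by (simp add: Suc.IH Bn_Suc')
  finally show ?case .
qed

lemma Bn_norm: "norm (Bn A1 n x) \<le> norm x"
proof (induction n)
  case 0 then show ?case by simp
next
  case (Suc n) then show ?case unfolding Bn_Suc using B_norm order_trans by blast
qed

lemma Bn_comm:
  assumes "bounded_clinear U" "\<And>x. U (A1 x) = A1 (U x)"
  shows "U (Bn A1 n x) = Bn A1 n (U x)"
proof (induction n)
  case 0 then show ?case by simp
next
  case (Suc n)
  show ?case unfolding Bn_Suc Bop_def by (simp add: bcl_diff [OF assms(1)] assms(2) Suc.IH)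
qed

lemma term_norm: "norm (scaleR (sc n) (Bn A1 n x)) \<le> sc n * norm x"
  using Bn_norm [of n x] sc_nonneg [of n] by (simp add: mult_left_mono)

lemma ser_summable: "summable (\<lambda>n. scaleR (sc n) (Bn A1 n x))"
  by (rule summable_comparison_test' [where N = 0, OF summable_mult2 [OF sc_summable]]) (rule term_norm)

lemma Tpart_lim: "(\<lambda>N. Tpart A1 N x) \<longlonglongrightarrow> Tser A1 x"
  unfolding Tpart_def Tser_def by (rule summable_LIMSEQ [OF ser_summable])

lemma Tpart_norm: "norm (Tpart A1 N x) \<le> norm x"
proof -
  have "norm (Tpart A1 N x) \<le> (\<Sum>n<N. norm (scaleR (sc n) (Bn A1 n x)))" unfolding Tpart_def by (rule norm_sum)
  also have "\<dots> \<le> (\<Sum>n<N. sc n * norm x)" by (rule sum_mono) (rule term_norm)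
  also have "\<dots> = (\<Sum>n<N. sc n) * norm x" by (simp add: sum_distrib_right)
  also have "\<dots> \<le> 1 * norm x" by (rule mult_right_mono [OF sc_partial_le]) simp
  finally show ?thesis by simp
qed

lemma Tpart_diff: "Tpart A1 N (x - y) = Tpart A1 N x - Tpart A1 N y"
  unfolding Tpart_def by (simp add: bcl_diff [OF Bn_bcl] scaleR_diff_right sum_subtractf)

lemma Tser_norm: "norm (Tser A1 x) \<le> norm x"
  by (rule LIMSEQ_le_const2 [OF tendsto_norm [OF Tpart_lim]]) (simp add: Tpart_norm)

lemma Tser_add: "Tser A1 (x + y) = Tser A1 x + Tser A1 y"
  unfolding Tser_def
  by (simp add: bcl_add [OF Bn_bcl] scaleR_add_right suminf_add [OF ser_summable ser_summable])

lemma Tser_scaleC: "Tser A1 (scaleC c x) = scaleC c (Tser A1 x)"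
  unfolding Tser_def suminf_scaleC [OF ser_summable]
  by (simp add: bcl_scaleC [OF Bn_bcl] scaleC_scaleR_commute)

lemma Tser_bcl: "bounded_clinear (Tser A1)"
  by (rule bcl_intro [where K = 1]) (simp_all add: Tser_add Tser_scaleC Tser_norm)

lemma Tser_sa: "cinner (Tser A1 x) y = cinner x (Tser A1 y)"
  unfolding Tser_def suminf_cinner_left [OF ser_summable] suminf_cinner_right [OF ser_summable]
  by (simp add: cinner_scaleR_left cinner_scaleR_right Bn_sa)

lemma Tser_comm:
  assumes "bounded_clinear U" "\<And>x. U (A1 x) = A1 (U x)"
  shows "U (Tser A1 x) = Tser A1 (U x)"
  unfolding Tser_def bcl_suminf [OF assms(1) ser_summable]
  by (simp add: bcl_scaleR [OF assms(1)] Bn_comm [OF assms])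

end


lemma sc_box: "(\<Sum>(i,j)\<in>{..<N}\<times>{..<N}. sc i * sc j) = (\<Sum>n<N. sc n)\<^sup>2"
  by (simp add: sum_product sum.cartesian_product power2_eq_square)

lemma sc_tri: "N \<ge> 2 \<Longrightarrow> (\<Sum>(i,j)\<in>{(i,j). i + j < N}. sc i * sc j) = 2 * (\<Sum>n<N. sc n) - 1"
proof -
  assume N: "N \<ge> 2"
  have "(\<Sum>(i,j)\<in>{(i,j). i + j < N}. sc i * sc j) = (\<Sum>k<N. \<Sum>i\<le>k. sc i * sc (k - i))"
    by (rule sum.triangle_reindex)
  also have "\<dots> = (\<Sum>k<N. 2 * sc k - (if k = 1 then 1 else 0))" by (simp add: sc_conv)
  also have "\<dots> = 2 * (\<Sum>n<N. sc n) - (\<Sum>k<N. (if k = 1 then 1 else 0))"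
    by (simp add: sum_subtractf sum_distrib_left)
  also have "(\<Sum>k<N. (if k = 1 then 1 else 0 :: real)) = 1" using N by (simp add: sum.delta)
  finally show ?thesis .
qed

context contr_pos
begin

lemma Tpart_Tpart:
  "Tpart A1 N (Tpart A1 N x) = (\<Sum>(i,j)\<in>{..<N}\<times>{..<N}. scaleR (sc i * sc j) (Bn A1 (i + j) x))"
proof -
  have "Tpart A1 N (Tpart A1 N x) = (\<Sum>i<N. \<Sum>j<N. scaleR (sc i * sc j) (Bn A1 (i + j) x))"
    unfolding Tpart_def
    by (simp add: bcl_sum [OF Bn_bcl] bcl_scaleR [OF Bn_bcl] scaleR_sum_right Bn_add)
  then show ?thesis by (simp add: sum.cartesian_product)
qed

lemma Tpart_tri:
  assumes N: "N \<ge> 2"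
  shows "(\<Sum>(i,j)\<in>{(i,j). i + j < N}. scaleR (sc i * sc j) (Bn A1 (i + j) x)) = scaleR 2 (Tpart A1 N x) - Bop A1 x"
proof -
  have "(\<Sum>(i,j)\<in>{(i,j). i + j < N}. scaleR (sc i * sc j) (Bn A1 (i + j) x))
      = (\<Sum>k<N. \<Sum>i\<le>k. scaleR (sc i * sc (k - i)) (Bn A1 (i + (k - i)) x))"
    by (rule sum.triangle_reindex)
  also have "\<dots> = (\<Sum>k<N. scaleR (\<Sum>i\<le>k. sc i * sc (k - i)) (Bn A1 k x))"
    by (rule sum.cong) (simp_all add: scaleR_sum_left)
  also have "\<dots> = (\<Sum>k<N. scaleR (2 * sc k) (Bn A1 k x) - (if k = 1 then Bn A1 k x else 0))"
    by (rule sum.cong) (simp_all add: sc_conv scaleR_diff_left)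
  also have "\<dots> = scaleR 2 (Tpart A1 N x) - Bn A1 1 x"
    using N by (simp add: sum_subtractf Tpart_def scaleR_sum_right sum.delta)
  finally show ?thesis using Bn_1 [of A1 x] by simp
qed

lemma TT_err:
  assumes N: "N \<ge> 2"
  shows "norm (Tpart A1 N (Tpart A1 N x) - (scaleR 2 (Tpart A1 N x) - Bop A1 x)) \<le> ((\<Sum>n<N. sc n) - 1)\<^sup>2 * norm x"
proof -
  define F where "F = (\<lambda>(i::nat,j::nat). scaleR (sc i * sc j) (Bn A1 (i + j) x))"
  define G where "G = (\<lambda>(i::nat,j::nat). sc i * sc j)"
  define box where "box = {..<N} \<times> {..<N}"
  define tri where "tri = {(i::nat,j::nat). i + j < N}"
  have fin: "finite box" unfolding box_def by simp
  have sub: "tri \<subseteq> box" unfolding tri_def box_def by auto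
  have FG: "norm (F p) \<le> G p * norm x" for p
  proof (cases p)
    case (Pair i j)
    have "0 \<le> sc i * sc j" by (simp add: sc_nonneg)
    then show ?thesis unfolding Pair F_def G_def using Bn_norm [of "i + j" x]
      by (simp add: mult_left_mono)
  qed
  have "Tpart A1 N (Tpart A1 N x) - (scaleR 2 (Tpart A1 N x) - Bop A1 x) = sum F box - sum F tri"
    unfolding Tpart_Tpart Tpart_tri [OF N, symmetric] F_def box_def tri_def by simp
  also have "\<dots> = sum F (box - tri)" by (rule sum_diff [OF fin sub, symmetric])
  finally have e: "Tpart A1 N (Tpart A1 N x) - (scaleR 2 (Tpart A1 N x) - Bop A1 x) = sum F (box - tri)" .
  have "norm (sum F (box - tri)) \<le> (\<Sum>p\<in>box - tri. norm (F p))" by (rule norm_sum)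
  also have "\<dots> \<le> (\<Sum>p\<in>box - tri. G p * norm x)" by (rule sum_mono) (rule FG)
  also have "\<dots> = (sum G box - sum G tri) * norm x"
    by (simp add: sum_distrib_right [symmetric] sum_diff [OF fin sub])
  also have "sum G box - sum G tri = ((\<Sum>n<N. sc n) - 1)\<^sup>2"
    unfolding G_def box_def tri_def sc_box sc_tri [OF N] by (simp add: power2_eq_square algebra_simps)
  finally show ?thesis unfolding e .
qed

lemma TT: "Tser A1 (Tser A1 x) = scaleR 2 (Tser A1 x) - Bop A1 x"
proof -
  have lim1: "(\<lambda>N. Tpart A1 N (Tpart A1 N x)) \<longlonglongrightarrow> Tser A1 (Tser A1 x)"
  proof -
    have a: "(\<lambda>N. Tpart A1 N (Tser A1 x)) \<longlonglongrightarrow> Tser A1 (Tser A1 x)" by (rule Tpart_lim)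
    have g0: "(\<lambda>N. norm (Tpart A1 N x - Tser A1 x)) \<longlonglongrightarrow> 0"
      by (rule tendsto_norm_zero [OF LIM_zero [OF Tpart_lim]])
    have b: "(\<lambda>N. Tpart A1 N (Tpart A1 N x - Tser A1 x)) \<longlonglongrightarrow> 0"
      by (rule Lim_null_comparison [OF _ g0]) (simp add: Tpart_norm)
    have "(\<lambda>N. Tpart A1 N (Tser A1 x) + Tpart A1 N (Tpart A1 N x - Tser A1 x)) \<longlonglongrightarrow> Tser A1 (Tser A1 x) + 0"
      by (rule tendsto_add [OF a b])
    then show ?thesis by (simp add: Tpart_diff)
  qed
  have lim2: "(\<lambda>N. Tpart A1 N (Tpart A1 N x)) \<longlonglongrightarrow> scaleR 2 (Tser A1 x) - Bop A1 x"
  proof -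
    have a: "(\<lambda>N. scaleR 2 (Tpart A1 N x) - Bop A1 x) \<longlonglongrightarrow> scaleR 2 (Tser A1 x) - Bop A1 x"
      by (intro tendsto_intros Tpart_lim)
    have s1: "(\<lambda>N. \<Sum>n<N. sc n) \<longlonglongrightarrow> 1" using summable_LIMSEQ [OF sc_summable] sc_suminf by simp
    have g0: "(\<lambda>N. ((\<Sum>n<N. sc n) - 1)\<^sup>2 * norm x) \<longlonglongrightarrow> 0"
    proof -
      have "(\<lambda>N. ((\<Sum>n<N. sc n) - 1)\<^sup>2 * norm x) \<longlonglongrightarrow> (1 - 1)\<^sup>2 * norm x"
        by (intro tendsto_intros s1)
      then show ?thesis by simp
    qed
    have b: "(\<lambda>N. Tpart A1 N (Tpart A1 N x) - (scaleR 2 (Tpart A1 N x) - Bop A1 x)) \<longlonglongrightarrow> 0"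
    proof (rule Lim_null_comparison [OF _ g0])
      show "\<forall>\<^sub>F N in sequentially. norm (Tpart A1 N (Tpart A1 N x) - (scaleR 2 (Tpart A1 N x) - Bop A1 x))
          \<le> ((\<Sum>n<N. sc n) - 1)\<^sup>2 * norm x"
        using TT_err eventually_sequentially by blast
    qed
    have "(\<lambda>N. (scaleR 2 (Tpart A1 N x) - Bop A1 x) + (Tpart A1 N (Tpart A1 N x) - (scaleR 2 (Tpart A1 N x) - Bop A1 x)))
        \<longlonglongrightarrow> (scaleR 2 (Tser A1 x) - Bop A1 x) + 0"
      by (rule tendsto_add [OF a b])
    then show ?thesis by simp
  qed
  show ?thesis using LIMSEQ_unique [OF lim1 lim2] .
qed

lemma S_bcl: "bounded_clinear (Sroot A1)"
  unfolding Sroot_def [abs_def] by (rule bcl_diff_fun [OF bcl_id Tser_bcl])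

lemma S_sa: "selfadjoint (Sroot A1)"
  unfolding selfadjoint_def using S_bcl
  by (simp add: Sroot_def cinner_diff_left cinner_diff_right Tser_sa)

lemma S_pos: "positive_op (Sroot A1)"
  unfolding positive_op_def
proof (intro conjI allI S_sa)
  fix x
  have "Re (cinner (Tser A1 x) x) \<le> cmod (cinner (Tser A1 x) x)" by (rule complex_Re_le_cmod)
  also have "\<dots> \<le> norm (Tser A1 x) * norm x" by (rule cauchy_schwarz)
  also have "\<dots> \<le> norm x * norm x" by (rule mult_right_mono [OF Tser_norm]) simp
  finally have "Re (cinner (Tser A1 x) x) \<le> (norm x)\<^sup>2" by (simp add: power2_eq_square)
  then show "0 \<le> Re (cinner (Sroot A1 x) x)"
    by (simp add: Sroot_def cinner_diff_left cinner_self_Re)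
qed

lemma S_sq: "Sroot A1 (Sroot A1 x) = A1 x"
proof -
  have "Sroot A1 (Sroot A1 x) = (x - Tser A1 x) - (Tser A1 x - Tser A1 (Tser A1 x))"
    unfolding Sroot_def by (simp add: bcl_diff [OF Tser_bcl])
  also have "\<dots> = A1 x" unfolding TT by (simp add: Bop_def scaleR_2 algebra_simps)
  finally show ?thesis .
qed

lemma S_comm:
  assumes "bounded_clinear U" "\<And>x. U (A1 x) = A1 (U x)"
  shows "U (Sroot A1 x) = Sroot A1 (U x)"
  unfolding Sroot_def by (simp add: bcl_diff [OF assms(1)] Tser_comm [OF assms])

end

definition sqrt_prop :: "('h::complex_inner \<Rightarrow> 'h) \<Rightarrow> ('h \<Rightarrow> 'h) \<Rightarrow> bool" where
  "sqrt_prop A S \<longleftrightarrow> positive_op S \<and> S \<circ> S = A \<and>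
     (\<forall>U. bounded_clinear U \<and> (\<forall>x. U (A x) = A (U x)) \<longrightarrow> (\<forall>x. U (S x) = S (U x)))"

lemma sqrt_exists:
  fixes A :: "'h::chilbert_space \<Rightarrow> 'h"
  assumes A: "positive_op A"
  shows "\<exists>S. sqrt_prop A S"
proof -
  have bcA: "bounded_clinear A" using A positive_selfadjoint selfadjoint_bcl by blast
  obtain K where K: "K > 0" "\<And>x. norm (A x) \<le> norm x * K" using bcl_bound [OF bcA] by blast
  define A1 where "A1 = (\<lambda>x. scaleR (1 / K) (A x))"
  have bc1: "bounded_clinear A1" unfolding A1_def by (rule bcl_scaleR_fun [OF bcA])
  have pos1: "positive_op A1"
    unfolding positive_op_def selfadjoint_def
  proof (intro conjI allI bc1)
    fix x y
    show "cinner (A1 x) y = cinner x (A1 y)" unfolding A1_def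
      using selfadjointD [OF positive_selfadjoint [OF A]] by (simp add: cinner_scaleR_left cinner_scaleR_right)
    show "0 \<le> Re (cinner (A1 x) x)" unfolding A1_def using positive_ge [OF A, of x] K(1)
      by (simp add: cinner_scaleR_left)
  qed
  have contr1: "norm (A1 x) \<le> norm x" for x
  proof -
    have "norm (A1 x) = norm (A x) / K" unfolding A1_def using K(1) by simp
    also have "\<dots> \<le> norm x" using K by (simp add: divide_le_eq)
    finally show ?thesis .
  qed
  interpret cp: contr_pos A1 using pos1 contr1 by unfold_locales
  define S where "S = (\<lambda>x. scaleR (sqrt K) (Sroot A1 x))"
  have bcS: "bounded_clinear S" unfolding S_def by (rule bcl_scaleR_fun [OF cp.S_bcl])
  have posS: "positive_op S"
    unfolding positive_op_def selfadjoint_def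
  proof (intro conjI allI bcS)
    fix x y
    show "cinner (S x) y = cinner x (S y)" unfolding S_def
      using selfadjointD [OF cp.S_sa] by (simp add: cinner_scaleR_left cinner_scaleR_right)
    show "0 \<le> Re (cinner (S x) x)" unfolding S_def using positive_ge [OF cp.S_pos, of x] K(1)
      by (simp add: cinner_scaleR_left)
  qed
  have sq: "S \<circ> S = A"
  proof
    fix x
    have "(S \<circ> S) x = scaleR (sqrt K * sqrt K) (Sroot A1 (Sroot A1 x))"
      unfolding S_def by (simp add: bcl_scaleR [OF cp.S_bcl])
    also have "\<dots> = scaleR K (A1 x)" using K(1) by (simp add: cp.S_sq)
    also have "\<dots> = A x" using K(1) unfolding A1_def by simp
    finally show "(S \<circ> S) x = A x" .
  qed
  have comm: "\<forall>x. U (S x) = S (U x)" if U: "bounded_clinear U" "\<forall>x. U (A x) = A (U x)" for U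
  proof -
    have "U (A1 x) = A1 (U x)" for x unfolding A1_def using U by (simp add: bcl_scaleR)
    then show ?thesis unfolding S_def using cp.S_comm [OF U(1)] by (simp add: bcl_scaleR [OF U(1)])
  qed
  show ?thesis unfolding sqrt_prop_def using posS sq comm by blast
qed

lemma sqrt_unique:
  fixes A :: "'h::chilbert_space \<Rightarrow> 'h"
  assumes S: "sqrt_prop A S" and B: "positive_op B" and BB: "B \<circ> B = A"
  shows "B = S"
proof -
  have Spos: "positive_op S" and SS: "S \<circ> S = A" using S unfolding sqrt_prop_def by auto
  have Ssa: "selfadjoint S" using Spos by (rule positive_selfadjoint)
  have Bsa: "selfadjoint B" using B by (rule positive_selfadjoint)
  have Sbc: "bounded_clinear S" using Ssa by (rule selfadjoint_bcl)
  have Bbc: "bounded_clinear B" using Bsa by (rule selfadjoint_bcl)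
  have BA: "B (A x) = A (B x)" for x using BB by (metis comp_apply)
  have BS: "B (S x) = S (B x)" for x using S Bbc BA unfolding sqrt_prop_def by blast
  have Ax: "A x = S (S x)" "A x = B (B x)" for x using SS BB by (metis comp_apply)+
  define D where "D = (\<lambda>x. S x - B x)"
  have Dbc: "bounded_clinear D" unfolding D_def by (rule bcl_diff_fun [OF Sbc Bbc])
  have Dsa: "cinner (D x) y = cinner x (D y)" for x y
    unfolding D_def by (simp add: cinner_diff_left cinner_diff_right selfadjointD [OF Ssa] selfadjointD [OF Bsa])
  have sum0: "S (D x) + B (D x) = 0" for x
    unfolding D_def by (simp add: bcl_diff [OF Sbc] bcl_diff [OF Bbc] BS flip: Ax)
  have q1: "0 \<le> Re (cinner (S (D x)) (D x))" for x by (rule positive_ge [OF Spos])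
  have q2: "0 \<le> Re (cinner (B (D x)) (D x))" for x by (rule positive_ge [OF B])
  have q3: "Re (cinner (S (D x)) (D x)) + Re (cinner (B (D x)) (D x)) = 0" for x
  proof -
    have "cinner (S (D x) + B (D x)) (D x) = 0" by (simp add: sum0)
    then have e: "cinner (S (D x)) (D x) + cinner (B (D x)) (D x) = 0" by (simp add: cinner_add_left)
    show ?thesis using arg_cong [OF e, of Re] by simp
  qed
  have SD: "S (D x) = 0" for x using q1 q2 q3 pos_zero [OF Spos] by (metis add_nonneg_eq_0_iff)
  have BD: "B (D x) = 0" for x using q1 q2 q3 pos_zero [OF B] by (metis add_nonneg_eq_0_iff)
  have DD: "D (D x) = 0" for x using SD [of x] BD [of x] by (simp add: D_def [of])
  have "D x = 0" for x
  proof -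
    have "cinner (D x) (D x) = cinner (D (D x)) x" by (simp add: Dsa)
    then have "cinner (D x) (D x) = 0" using DD by simp
    then show ?thesis using cinner_eq_zero_iff by blast
  qed
  then show ?thesis unfolding D_def by (auto simp: fun_eq_iff)
qed

lemma op_sqrt_prop:
  fixes A :: "'h::chilbert_space \<Rightarrow> 'h"
  assumes A: "positive_op A"
  shows "sqrt_prop A (op_sqrt A)"
proof -
  obtain S where S: "sqrt_prop A S" using sqrt_exists [OF A] by blast
  have "op_sqrt A = S" unfolding op_sqrt_def
  proof (rule the_equality)
    show "positive_op S \<and> S \<circ> S = A" using S unfolding sqrt_prop_def by blast
    fix B assume "positive_op B \<and> B \<circ> B = A"
    then show "B = S" using sqrt_unique [OF S] by blast
  qed
  then show ?thesis using S by simp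
qed


lemma closure_csubspace:
  fixes W :: "'a::chilbert_space set"
  assumes W: "csubspace W"
  shows "csubspace (closure W)"
  unfolding csubspace_def
proof (intro conjI ballI allI)
  show "0 \<in> closure W" using csubspace_0 [OF W] closure_subset by blast
next
  fix x y assume x: "x \<in> closure W" and y: "y \<in> closure W"
  obtain s where s: "\<And>n. s n \<in> W" "s \<longlonglongrightarrow> x" using x closure_sequential by metis
  obtain t where t: "\<And>n. t n \<in> W" "t \<longlonglongrightarrow> y" using y closure_sequential by metis
  have l: "(\<lambda>n. s n + t n) \<longlonglongrightarrow> x + y" by (intro tendsto_add s t)
  have m: "\<And>n. s n + t n \<in> W" using W s t csubspace_add by blast
  show "x + y \<in> closure W" unfolding closure_sequential
    using l m by (intro exI [of _ "\<lambda>n. s n + t n"]) simp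
next
  fix c x assume x: "x \<in> closure W"
  obtain s where s: "\<And>n. s n \<in> W" "s \<longlonglongrightarrow> x" using x closure_sequential by metis
  have l: "(\<lambda>n. scaleC c (s n)) \<longlonglongrightarrow> scaleC c x" by (rule bounded_linear.tendsto [OF bl_scaleC s(2)])
  have m: "\<And>n. scaleC c (s n) \<in> W" using W s csubspace_scaleC by blast
  show "scaleC c x \<in> closure W" unfolding closure_sequential
    using l m by (intro exI [of _ "\<lambda>n. scaleC c (s n)"]) simp
qed

lemma csubspace_range: "bounded_clinear T \<Longrightarrow> csubspace (range T)"
  unfolding csubspace_def
  by (auto simp: bcl_zero [symmetric] bcl_add [symmetric] bcl_scaleC [symmetric] intro: range_eqI)

lemma vanish_range_ker:
  fixes A :: "'h::chilbert_space \<Rightarrow> 'h"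
  assumes A: "selfadjoint A" and D: "bounded_clinear D"
    and r: "\<And>x. D (A x) = 0" and k: "\<And>x. A x = 0 \<Longrightarrow> D x = 0"
  shows "D x = 0"
proof -
  have bcA: "bounded_clinear A" using A by (rule selfadjoint_bcl)
  define M where "M = closure (range A)"
  interpret M: closed_sub M unfolding M_def
    by unfold_locales (simp_all add: closure_csubspace csubspace_range bcA)
  have "closure (range A) \<subseteq> {v. D v = 0}"
    by (rule closure_minimal) (auto simp: r closed_ker [OF D])
  then have d1: "D (orth_proj M x) = 0" using M.proj_in unfolding M_def by blast
  have "cinner (A (x - orth_proj M x)) y = 0" for y
  proof -
    have "A y \<in> range A" by (rule rangeI)
    then have "A y \<in> M" unfolding M_def using closure_subset [of "range A"] by (rule subsetD [rotated])
    then have "cinner (x - orth_proj M x) (A y) = 0" by (rule M.proj_orth)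
    then show ?thesis by (simp only: selfadjointD [OF A])
  qed
  then have "A (x - orth_proj M x) = 0" using cinner_eq_zero_iff by blast
  then have d2: "D (x - orth_proj M x) = 0" by (rule k)
  show ?thesis using d1 d2 by (simp add: bcl_diff [OF D])
qed

lemma sa_commute_proj:
  fixes R :: "'h::chilbert_space \<Rightarrow> 'h"
  assumes N: "closed_sub N" and R: "selfadjoint R" and inv: "\<And>k. k \<in> N \<Longrightarrow> R k \<in> N"
  shows "orth_proj N (R x) = R (orth_proj N x)"
proof -
  interpret N: closed_sub N by (rule N)
  have bcR: "bounded_clinear R" using R by (rule selfadjoint_bcl)
  show ?thesis
  proof (rule N.proj_eq)
    show "R (orth_proj N x) \<in> N" by (rule inv [OF N.proj_in])
    fix m assume m: "m \<in> N"
    have "cinner (R x - R (orth_proj N x)) m = cinner (x - orth_proj N x) (R m)"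
      by (simp add: bcl_diff [OF bcR, symmetric] selfadjointD [OF R])
    also have "\<dots> = 0" by (rule N.proj_orth [OF inv [OF m]])
    finally show "cinner (R x - R (orth_proj N x)) m = 0" .
  qed
qed

lemma selfadjoint_comp: "selfadjoint A \<Longrightarrow> selfadjoint B \<Longrightarrow> (\<forall>x. A (B x) = B (A x)) \<Longrightarrow> selfadjoint (\<lambda>x. A (B x))"
  unfolding selfadjoint_def using bcl_compose by (metis)

lemma selfadjoint_diff: "selfadjoint A \<Longrightarrow> selfadjoint B \<Longrightarrow> selfadjoint (\<lambda>x. A x - B x)"
  unfolding selfadjoint_def by (simp add: bcl_diff_fun cinner_diff_left cinner_diff_right)

lemma selfadjoint_add: "selfadjoint A \<Longrightarrow> selfadjoint B \<Longrightarrow> selfadjoint (\<lambda>x. A x + B x)"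
  unfolding selfadjoint_def by (simp add: bcl_add_fun cinner_add_left cinner_add_right)

lemma selfadjoint_scaleR: "selfadjoint A \<Longrightarrow> selfadjoint (\<lambda>x. scaleR r (A x))"
  unfolding selfadjoint_def by (simp add: bcl_scaleR_fun cinner_scaleR_left cinner_scaleR_right)

locale sa_op =
  fixes P :: "'h::chilbert_space \<Rightarrow> 'h"
  assumes saP: "selfadjoint P"
begin

lemma bcP: "bounded_clinear P" using saP by (rule selfadjoint_bcl)

lemma PP_pos: "positive_op (P \<circ> P)"
  unfolding positive_op_def
proof (intro conjI allI)
  show "selfadjoint (P \<circ> P)" using selfadjoint_comp [OF saP saP] by (simp add: comp_def)
  fix x show "0 \<le> Re (cinner ((P \<circ> P) x) x)"
    by (simp only: comp_apply selfadjointD [OF saP, of "P x" x] cinner_self_Re zero_le_power2)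
qed

abbreviation "Ab \<equiv> op_abs P"
abbreviation "R \<equiv> op_sqrtabs P"

lemma Ab_prop: "sqrt_prop (P \<circ> P) Ab"
  unfolding op_abs_def by (rule op_sqrt_prop [OF PP_pos])

lemma Ab_pos: "positive_op Ab" using Ab_prop unfolding sqrt_prop_def by blast
lemma Ab_sa: "selfadjoint Ab" using Ab_pos by (rule positive_selfadjoint)
lemma Ab_bcl: "bounded_clinear Ab" using Ab_sa by (rule selfadjoint_bcl)
lemma Ab_sq: "Ab (Ab x) = P (P x)" using Ab_prop unfolding sqrt_prop_def by (metis comp_apply)
lemma Ab_comm: "bounded_clinear U \<Longrightarrow> (\<And>x. U (P (P x)) = P (P (U x))) \<Longrightarrow> U (Ab x) = Ab (U x)"
  using Ab_prop unfolding sqrt_prop_def by simp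
lemma P_Ab: "P (Ab x) = Ab (P x)" using Ab_comm [OF bcP] by blast

lemma R_prop: "sqrt_prop Ab R"
  unfolding op_sqrtabs_def by (rule op_sqrt_prop [OF Ab_pos])
lemma R_pos: "positive_op R" using R_prop unfolding sqrt_prop_def by blast
lemma R_sa: "selfadjoint R" using R_pos by (rule positive_selfadjoint)
lemma R_bcl: "bounded_clinear R" using R_sa by (rule selfadjoint_bcl)
lemma R_sq: "R (R x) = Ab x" using R_prop unfolding sqrt_prop_def by (metis comp_apply)
lemma R_comm: "bounded_clinear U \<Longrightarrow> (\<And>x. U (Ab x) = Ab (U x)) \<Longrightarrow> U (R x) = R (U x)"
  using R_prop unfolding sqrt_prop_def by simp
lemma P_R: "P (R x) = R (P x)" using R_comm [OF bcP P_Ab] by blast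

lemma norm_P_Ab: "norm (P x) = norm (Ab x)"
proof -
  have "(norm (P x))\<^sup>2 = Re (cinner (P (P x)) x)" by (simp only: selfadjointD [OF saP, of "P x" x] cinner_self_Re)
  also have "\<dots> = Re (cinner (Ab (Ab x)) x)" by (simp add: Ab_sq)
  also have "\<dots> = (norm (Ab x))\<^sup>2" by (simp only: selfadjointD [OF Ab_sa, of "Ab x" x] cinner_self_Re)
  finally show ?thesis by (simp add: power2_eq_iff_nonneg)
qed

lemma ker_Ab: "Ab x = 0 \<longleftrightarrow> P x = 0"
  using norm_P_Ab [of x] by auto

lemma ker_R: "R x = 0 \<longleftrightarrow> P x = 0"
proof
  assume "R x = 0"
  then have "Ab x = 0" using R_sq [of x] bcl_zero [OF R_bcl] by simp
  then show "P x = 0" using ker_Ab by simp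
next
  assume "P x = 0"
  then have "Ab x = 0" using ker_Ab by simp
  then have "(norm (R x))\<^sup>2 = 0"
    by (simp only: cinner_self_Re [symmetric] selfadjointD [OF R_sa, of "R x" x, symmetric] R_sq) simp
  then show "R x = 0" by simp
qed

definition Pp where "Pp = (\<lambda>x. scaleR (1/2) (Ab x + P x))"
definition Pm where "Pm = (\<lambda>x. scaleR (1/2) (Ab x - P x))"

lemma Pp_sa: "selfadjoint Pp"
  unfolding Pp_def by (rule selfadjoint_scaleR [OF selfadjoint_add [OF Ab_sa saP]])
lemma Pm_sa: "selfadjoint Pm"
  unfolding Pm_def by (rule selfadjoint_scaleR [OF selfadjoint_diff [OF Ab_sa saP]])
lemma Pp_bcl: "bounded_clinear Pp" using Pp_sa by (rule selfadjoint_bcl)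
lemma Pm_bcl: "bounded_clinear Pm" using Pm_sa by (rule selfadjoint_bcl)

lemma Pp_Pm: "Pp (Pm x) = 0"
  unfolding Pp_def Pm_def
  by (simp add: bcl_scaleR [OF Ab_bcl] bcl_scaleR [OF bcP] bcl_diff [OF Ab_bcl] bcl_diff [OF bcP]
      Ab_sq P_Ab scaleR_diff_right scaleR_add_right)

lemma Pm_Pp: "Pm (Pp x) = 0"
  unfolding Pp_def Pm_def
  by (simp add: bcl_scaleR [OF Ab_bcl] bcl_scaleR [OF bcP] bcl_add [OF Ab_bcl] bcl_add [OF bcP]
      Ab_sq P_Ab scaleR_diff_right scaleR_add_right)

lemma Ab_split: "Ab x = Pp x + Pm x"
  unfolding Pp_def Pm_def by (simp add: scaleR_add_right [symmetric] scaleR_diff_right)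
    (simp add: algebra_simps scaleR_2 [symmetric])

lemma P_split: "P x = Pp x - Pm x"
  unfolding Pp_def Pm_def by (simp add: algebra_simps scaleR_2 [symmetric])

lemma ker_Pp_of_P: "P x = 0 \<Longrightarrow> Pp x = 0"
  using ker_Ab unfolding Pp_def by simp
lemma ker_Pm_of_P: "P x = 0 \<Longrightarrow> Pm x = 0"
  using ker_Ab unfolding Pm_def by simp

definition Np where "Np = {x. Pp x = 0}"
definition Nm where "Nm = {x. Pm x = 0}"

lemma Np_cs: "closed_sub Np" unfolding Np_def by (rule closed_sub_ker [OF Pp_bcl])
lemma Nm_cs: "closed_sub Nm" unfolding Nm_def by (rule closed_sub_ker [OF Pm_bcl])

definition Ep where "Ep = (\<lambda>x. x - orth_proj Np x)"
definition Em where "Em = (\<lambda>x. x - orth_proj Nm x)"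

lemma Ep_sa: "selfadjoint Ep"
  unfolding Ep_def by (rule selfadjoint_diff [OF selfadjoint_id closed_sub.proj_sa [OF Np_cs]])
lemma Em_sa: "selfadjoint Em"
  unfolding Em_def by (rule selfadjoint_diff [OF selfadjoint_id closed_sub.proj_sa [OF Nm_cs]])
lemma Ep_bcl: "bounded_clinear Ep" using Ep_sa by (rule selfadjoint_bcl)
lemma Em_bcl: "bounded_clinear Em" using Em_sa by (rule selfadjoint_bcl)

lemma Ep_zero_iff: "Ep x = 0 \<longleftrightarrow> Pp x = 0"
proof -
  have "Ep x = 0 \<longleftrightarrow> orth_proj Np x = x" unfolding Ep_def by auto
  also have "\<dots> \<longleftrightarrow> x \<in> Np" using closed_sub.proj_in [OF Np_cs] closed_sub.proj_id [OF Np_cs] by metis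
  finally show ?thesis unfolding Np_def by simp
qed

lemma Em_zero_iff: "Em x = 0 \<longleftrightarrow> Pm x = 0"
proof -
  have "Em x = 0 \<longleftrightarrow> orth_proj Nm x = x" unfolding Em_def by auto
  also have "\<dots> \<longleftrightarrow> x \<in> Nm" using closed_sub.proj_in [OF Nm_cs] closed_sub.proj_id [OF Nm_cs] by metis
  finally show ?thesis unfolding Nm_def by simp
qed

lemma Ep_idem: "Ep (Ep x) = Ep x"
  unfolding Ep_def using closed_sub.proj_idem [OF Np_cs] bcl_diff [OF closed_sub.proj_bcl [OF Np_cs]]
  by simp

lemma Em_idem: "Em (Em x) = Em x"
  unfolding Em_def using closed_sub.proj_idem [OF Nm_cs] bcl_diff [OF closed_sub.proj_bcl [OF Nm_cs]]
  by simp

lemma Pp_Ep: "Pp (Ep x) = Pp x"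
proof -
  have "Pp (orth_proj Np x) = 0" using closed_sub.proj_in [OF Np_cs] unfolding Np_def by blast
  then show ?thesis unfolding Ep_def by (simp add: bcl_diff [OF Pp_bcl])
qed

lemma Pm_Em: "Pm (Em x) = Pm x"
proof -
  have "Pm (orth_proj Nm x) = 0" using closed_sub.proj_in [OF Nm_cs] unfolding Nm_def by blast
  then show ?thesis unfolding Em_def by (simp add: bcl_diff [OF Pm_bcl])
qed

lemma Ep_Pp: "Ep (Pp y) = Pp y"
proof -
  have "orth_proj Np (Pp y) = 0"
    unfolding closed_sub.proj_zero_iff [OF Np_cs]
    by (simp add: Np_def selfadjointD [OF Pp_sa])
  then show ?thesis unfolding Ep_def by simp
qed

lemma Em_Pm: "Em (Pm y) = Pm y"
proof -
  have "orth_proj Nm (Pm y) = 0"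
    unfolding closed_sub.proj_zero_iff [OF Nm_cs]
    by (simp add: Nm_def selfadjointD [OF Pm_sa])
  then show ?thesis unfolding Em_def by simp
qed

lemma Ep_Pm: "Ep (Pm y) = 0"
  unfolding Ep_zero_iff by (rule Pp_Pm)

lemma Em_Pp: "Em (Pp y) = 0"
  unfolding Em_zero_iff by (rule Pm_Pp)

lemma Pm_Ep: "Pm (Ep x) = 0"
proof -
  have "cinner (Pm (Ep x)) y = 0" for y
    by (simp add: selfadjointD [OF Pm_sa] selfadjointD [OF Ep_sa] Ep_Pm)
  then show ?thesis using cinner_eq_zero_iff by blast
qed

lemma Pp_Em: "Pp (Em x) = 0"
proof -
  have "cinner (Pp (Em x)) y = 0" for y
    by (simp add: selfadjointD [OF Pp_sa] selfadjointD [OF Em_sa] Em_Pp)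
  then show ?thesis using cinner_eq_zero_iff by blast
qed

lemma Ep_Em: "Ep (Em x) = 0" unfolding Ep_zero_iff by (rule Pp_Em)
lemma Em_Ep: "Em (Ep x) = 0" unfolding Em_zero_iff by (rule Pm_Ep)

definition sg where "sg = (\<lambda>x. Ep x - Em x)"

lemma sg_sa: "selfadjoint sg" unfolding sg_def by (rule selfadjoint_diff [OF Ep_sa Em_sa])
lemma sg_bcl: "bounded_clinear sg" using sg_sa by (rule selfadjoint_bcl)

lemma sg_Ab: "sg (Ab x) = P x"
  unfolding sg_def Ab_split
  by (simp add: bcl_add [OF Ep_bcl] bcl_add [OF Em_bcl] Ep_Pp Ep_Pm Em_Pp Em_Pm P_split)

lemma sg_ker: "P x = 0 \<Longrightarrow> sg x = 0"
proof -
  assume "P x = 0"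
  then have "Ep x = 0" "Em x = 0" using Ep_zero_iff Em_zero_iff ker_Pp_of_P ker_Pm_of_P by auto
  then show ?thesis unfolding sg_def by simp
qed

lemma sg_Ep: "sg (Ep x) = Ep x" unfolding sg_def by (simp add: Ep_idem Em_Ep)
lemma sg_Em: "sg (Em x) = - Em x" unfolding sg_def by (simp add: Em_idem Ep_Em)

lemma sg_sg: "sg (sg x) = Ep x + Em x"
  unfolding sg_def by (simp add: bcl_diff [OF Ep_bcl] bcl_diff [OF Em_bcl] Ep_idem Em_idem Ep_Em Em_Ep)

lemma P_Ep: "P (Ep x) = Pp x" using P_split [of "Ep x"] by (simp only: Pp_Ep Pm_Ep diff_zero)
lemma P_Em: "P (Em x) = - Pm x" using P_split [of "Em x"] by (simp only: Pm_Em Pp_Em diff_0)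

lemma P_EpEm: "P (Ep x + Em x) = P x"
  using P_split [of x] by (simp only: bcl_add [OF bcP] P_Ep P_Em diff_conv_add_uminus)

lemma R_Pp: "R (Pp x) = Pp (R x)"
proof -
  have "R (Ab x) = Ab (R x)" by (simp only: R_sq [symmetric])
  then show ?thesis unfolding Pp_def by (simp add: bcl_scaleR [OF R_bcl] bcl_add [OF R_bcl] P_R)
qed

lemma R_Pm: "R (Pm x) = Pm (R x)"
proof -
  have "R (Ab x) = Ab (R x)" by (simp only: R_sq [symmetric])
  then show ?thesis unfolding Pm_def by (simp add: bcl_scaleR [OF R_bcl] bcl_diff [OF R_bcl] P_R)
qed

lemma R_Ep: "R (Ep x) = Ep (R x)"
proof -
  have "orth_proj Np (R x) = R (orth_proj Np x)"
    by (rule sa_commute_proj [OF Np_cs R_sa]) (simp add: Np_def R_Pp [symmetric] bcl_zero [OF R_bcl])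
  then show ?thesis unfolding Ep_def by (simp add: bcl_diff [OF R_bcl])
qed

lemma R_Em: "R (Em x) = Em (R x)"
proof -
  have "orth_proj Nm (R x) = R (orth_proj Nm x)"
    by (rule sa_commute_proj [OF Nm_cs R_sa]) (simp add: Nm_def R_Pm [symmetric] bcl_zero [OF R_bcl])
  then show ?thesis unfolding Em_def by (simp add: bcl_diff [OF R_bcl])
qed

lemma R_sg: "R (sg x) = sg (R x)"
  unfolding sg_def by (simp add: bcl_diff [OF R_bcl] R_Ep R_Em)

lemma opsign_eq: "opsign P = sg"
  unfolding opsign_def
proof (rule the_equality)
  show "bounded_clinear sg \<and> sg \<circ> Ab = P \<and> (\<forall>x. P x = 0 \<longrightarrow> sg x = 0)"
    using sg_bcl sg_Ab sg_ker by (auto simp: fun_eq_iff)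
  fix S assume S: "bounded_clinear S \<and> S \<circ> Ab = P \<and> (\<forall>x. P x = 0 \<longrightarrow> S x = 0)"
  have "S x - sg x = 0" for x
  proof (rule vanish_range_ker [OF Ab_sa, where D = "\<lambda>x. S x - sg x"])
    show "bounded_clinear (\<lambda>x. S x - sg x)" using S sg_bcl by (intro bcl_diff_fun) auto
    fix y show "S (Ab y) - sg (Ab y) = 0" using S sg_Ab by (metis comp_apply right_minus_eq)
    assume "Ab y = 0"
    then have "P y = 0" using ker_Ab by simp
    then show "S y - sg y = 0" using S sg_ker by simp
  qed
  then show "S = sg" by (auto simp: fun_eq_iff)
qed

lemma kerproj_eq: "kerproj P = orth_proj {x. P x = 0}"
proof -
  have cs: "closed_sub {x. P x = 0}" by (rule closed_sub_ker [OF bcP])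
  show ?thesis unfolding kerproj_def
  proof (rule the_equality)
    show "selfadjoint (orth_proj {x. P x = 0}) \<and> orth_proj {x. P x = 0} \<circ> orth_proj {x. P x = 0} = orth_proj {x. P x = 0}
        \<and> range (orth_proj {x. P x = 0}) = {x. P x = 0}"
      using closed_sub.proj_sa [OF cs] closed_sub.proj_idem [OF cs] closed_sub.proj_range [OF cs]
      by (auto simp: fun_eq_iff)
    fix Q assume Q: "selfadjoint Q \<and> Q \<circ> Q = Q \<and> range Q = {x. P x = 0}"
    show "Q = orth_proj {x. P x = 0}"
      by (rule sa_idem_unique) (use Q closed_sub.proj_sa [OF cs] closed_sub.proj_idem [OF cs]
          closed_sub.proj_range [OF cs] in \<open>auto simp: fun_eq_iff\<close>)
  qed
qed

lemma kerproj_ker: "P (kerproj P x) = 0"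
  unfolding kerproj_eq using closed_sub.proj_in [OF closed_sub_ker [OF bcP]] by blast

end


locale main_loc = sa_op P + gfam g
  for P :: "'h::chilbert_space \<Rightarrow> 'h" and g :: "'z \<Rightarrow> 'c::chilbert_space \<Rightarrow> 'h" +
  assumes dense: "closure (cspan (\<Union>z. range (g z))) = UNIV"
begin

definition Phi where "Phi f = hat g (R f)"

lemma Phi_add: "Phi (f1 + f2) = (\<lambda>z. Phi f1 z + Phi f2 z)"
  unfolding Phi_def by (simp add: bcl_add [OF R_bcl] hat_add)
lemma Phi_diff: "Phi (f1 - f2) = (\<lambda>z. Phi f1 z - Phi f2 z)"
  unfolding Phi_def by (simp add: bcl_diff [OF R_bcl] hat_diff)
lemma Phi_scaleC: "Phi (scaleC c f) = (\<lambda>z. scaleC c (Phi f z))"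
  unfolding Phi_def by (simp add: bcl_scaleC [OF R_bcl] hat_scaleC)
lemma Phi_zero: "Phi 0 = (\<lambda>z. 0)"
  unfolding Phi_def by (simp add: bcl_zero [OF R_bcl] hat_zero)

lemma Phi_eq_iff: "Phi f1 = Phi f2 \<longleftrightarrow> P (f1 - f2) = 0"
proof
  assume "Phi f1 = Phi f2"
  then have "R f1 = R f2" unfolding Phi_def by (rule hat_inj [OF dense])
  then have "R (f1 - f2) = 0" by (simp add: bcl_diff [OF R_bcl])
  then show "P (f1 - f2) = 0" using ker_R by simp
next
  assume "P (f1 - f2) = 0"
  then have "R (f1 - f2) = 0" using ker_R by simp
  then show "Phi f1 = Phi f2" unfolding Phi_def by (simp add: bcl_diff [OF R_bcl])
qed

lemma hatspace_eq: "hatspace g P = range Phi"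
  unfolding hatspace_def Phi_def by auto

lemma sg_ker_diff: "P (f1 - f2) = 0 \<Longrightarrow> sg f1 = sg f2"
  using sg_ker [of "f1 - f2"] by (simp add: bcl_diff [OF sg_bcl])

lemma Kform_Phi: "Kform g P (Phi f) (Phi h) = cinner (sg f) h"
proof -
  define f' where "f' = (SOME f'. Phi f = hat g (R f'))"
  define h' where "h' = (SOME h'. Phi h = hat g (R h'))"
  have "Phi f = hat g (R f')" unfolding f'_def by (rule someI [of _ f]) (simp add: Phi_def)
  then have "P (f - f') = 0" using Phi_eq_iff unfolding Phi_def by simp
  then have sf: "sg f' = sg f" using sg_ker_diff by (metis minus_diff_eq bcl_minus [OF bcP] neg_equal_0_iff_equal)
  have "Phi h = hat g (R h')" unfolding h'_def by (rule someI [of _ h]) (simp add: Phi_def)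
  then have "P (h' - h) = 0" using Phi_eq_iff unfolding Phi_def by (metis minus_diff_eq bcl_minus [OF bcP] neg_equal_0_iff_equal)
  then have sh: "sg (h' - h) = 0" by (rule sg_ker)
  have kp: "sg (kerproj P h') = 0" by (rule sg_ker [OF kerproj_ker])
  have "Kform g P (Phi f) (Phi h) = cinner (sg f') (h' - kerproj P h')"
    unfolding Kform_def Let_def opsign_eq f'_def h'_def Phi_def by simp
  also have "\<dots> = cinner (sg f) h' - cinner f (sg (kerproj P h'))"
    by (simp add: sf cinner_diff_right selfadjointD [OF sg_sa])
  also have "\<dots> = cinner (sg f) h'" by (simp add: kp)
  also have "\<dots> = cinner (sg f) h + cinner f (sg (h' - h))"
    by (simp add: selfadjointD [OF sg_sa, symmetric] cinner_diff_right)
  also have "\<dots> = cinner (sg f) h" by (simp add: sh)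
  finally show ?thesis .
qed

lemma csub_image:
  assumes E: "bounded_clinear E"
  shows "fun_csubspace (Phi ` range E)"
  unfolding fun_csubspace_def
proof (intro conjI ballI allI)
  show "(\<lambda>z. 0) \<in> Phi ` range E" using Phi_zero bcl_zero [OF E] by (metis rangeI image_eqI)
next
  fix F G assume "F \<in> Phi ` range E" "G \<in> Phi ` range E"
  then obtain a b where F: "F = Phi (E a)" and G: "G = Phi (E b)" by blast
  have "(\<lambda>z. F z + G z) = Phi (E (a + b))" unfolding F G by (simp add: bcl_add [OF E] Phi_add)
  then show "(\<lambda>z. F z + G z) \<in> Phi ` range E" by blast
next
  fix c F assume "F \<in> Phi ` range E"
  then obtain a where F: "F = Phi (E a)" by blast
  have "(\<lambda>z. scaleC c (F z)) = Phi (E (scaleC c a))" unfolding F by (simp add: bcl_scaleC [OF E] Phi_scaleC)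
  then show "(\<lambda>z. scaleC c (F z)) \<in> Phi ` range E" by blast
qed

lemma hilbert_part:
  assumes E: "bounded_clinear E" and idem: "\<And>x. E (E x) = E x"
    and Bf: "\<And>x y. Bf (Phi (E x)) (Phi (E y)) = cinner (E x) (E y)"
  shows "fun_hilbert (Phi ` range E) Bf"
  unfolding fun_hilbert_def
proof (intro conjI ballI allI impI)
  fix F assume F: "F \<in> Phi ` range E" and F0: "F \<noteq> (\<lambda>z. 0)"
  obtain a where Fa: "F = Phi (E a)" using F by blast
  have "E a \<noteq> 0" using F0 Fa Phi_zero by auto
  then show "0 < Re (Bf F F)" unfolding Fa Bf by (simp add: cinner_self_Re)
next
  fix s :: "nat \<Rightarrow> 'z \<Rightarrow> 'c"
  assume h: "(\<forall>n. s n \<in> Phi ` range E) \<and>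
    (\<forall>e>0. \<exists>N. \<forall>m\<ge>N. \<forall>n\<ge>N. Re (Bf (\<lambda>z. s m z - s n z) (\<lambda>z. s m z - s n z)) < e)"
  have "\<forall>n. \<exists>a. s n = Phi (E a)" using h by blast
  then obtain a where sa: "\<And>n. s n = Phi (E (a n))" by metis
  define e where "e n = E (a n)" for n
  have diffs: "(\<lambda>z. s m z - s n z) = Phi (E (a m - a n))" for m n
    unfolding sa by (simp add: Phi_diff bcl_diff [OF E])
  have nd: "Re (Bf (\<lambda>z. s m z - s n z) (\<lambda>z. s m z - s n z)) = (norm (e m - e n))\<^sup>2" for m n
    unfolding diffs Bf e_def by (simp add: bcl_diff [OF E] cinner_self_Re)
  have "Cauchy e"
  proof (rule CauchyI)
    fix r :: real assume r: "0 < r"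
    then obtain N where N: "\<forall>m\<ge>N. \<forall>n\<ge>N. (norm (e m - e n))\<^sup>2 < r\<^sup>2" using h nd
      by (metis zero_less_power)
    show "\<exists>N. \<forall>m\<ge>N. \<forall>n\<ge>N. norm (e m - e n) < r"
      using N r by (meson power_less_imp_less_base less_imp_le)
  qed
  then obtain L where L: "e \<longlonglongrightarrow> L" using Cauchy_convergent convergent_def by blast
  have clE: "closed {x. E x = x}"
    by (rule closed_Collect_eq) (simp_all add: bcl_continuous_on [OF E] continuous_on_id)
  have "L \<in> {x. E x = x}" by (rule closed_sequentially [OF clE _ L]) (simp add: e_def idem)
  then have EL: "E L = L" by simp
  define F where "F = Phi L"
  have FV: "F \<in> Phi ` range E" unfolding F_def using EL by (metis rangeI image_eqI)
  have conv: "\<forall>r>0. \<exists>N. \<forall>n\<ge>N. Re (Bf (\<lambda>z. s n z - F z) (\<lambda>z. s n z - F z)) < r"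
  proof (intro allI impI)
    fix r :: real assume r: "0 < r"
    have dn: "(\<lambda>z. s n z - F z) = Phi (E (a n - L))" for n
      unfolding sa F_def by (simp add: Phi_diff bcl_diff [OF E] EL)
    have nd2: "Re (Bf (\<lambda>z. s n z - F z) (\<lambda>z. s n z - F z)) = (norm (e n - L))\<^sup>2" for n
      unfolding dn Bf e_def by (simp add: bcl_diff [OF E] EL cinner_self_Re)
    have "\<forall>\<^sub>F n in sequentially. dist (e n) L < sqrt r" using L r by (simp add: tendsto_iff)
    then obtain N where "\<And>n. n \<ge> N \<Longrightarrow> norm (e n - L) < sqrt r"
      unfolding eventually_sequentially dist_norm by blast
    then have "\<forall>n\<ge>N. (norm (e n - L))\<^sup>2 < r"
      using r by (metis norm_ge_zero real_sqrt_less_iff real_sqrt_abs real_sqrt_power abs_norm_cancel)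
    then show "\<exists>N. \<forall>n\<ge>N. Re (Bf (\<lambda>z. s n z - F z) (\<lambda>z. s n z - F z)) < r" using nd2 by auto
  qed
  show "\<exists>F\<in>Phi ` range E. \<forall>e>0. \<exists>N. \<forall>n\<ge>N. Re (Bf (\<lambda>z. s n z - F z) (\<lambda>z. s n z - F z)) < e"
    using FV conv by blast
qed

lemma Kform_Ep: "Kform g P (Phi (Ep x)) (Phi (Ep y)) = cinner (Ep x) (Ep y)"
  by (simp add: Kform_Phi sg_Ep)

lemma Kform_Em: "- Kform g P (Phi (Em x)) (Phi (Em y)) = cinner (Em x) (Em y)"
  by (simp add: Kform_Phi sg_Em cinner_minus_left)

lemma krein: "fun_krein_space (hatspace g P) (Kform g P)"
  unfolding fun_krein_space_def hatspace_eq
proof (intro conjI)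
  show "fun_csubspace (range Phi)" using csub_image [OF bcl_id] by simp
  show "\<forall>F\<in>range Phi. \<forall>G\<in>range Phi. \<forall>H\<in>range Phi. \<forall>a.
      Kform g P (\<lambda>z. scaleC a (F z) + G z) H = a * Kform g P F H + Kform g P G H"
  proof (intro ballI allI)
    fix F G H a assume "F \<in> range Phi" "G \<in> range Phi" "H \<in> range Phi"
    then obtain f1 f2 h where F: "F = Phi f1" and G: "G = Phi f2" and H: "H = Phi h" by blast
    have "(\<lambda>z. scaleC a (F z) + G z) = Phi (scaleC a f1 + f2)" unfolding F G by (simp add: Phi_add Phi_scaleC)
    then show "Kform g P (\<lambda>z. scaleC a (F z) + G z) H = a * Kform g P F H + Kform g P G H"
      unfolding F G H by (simp add: Kform_Phi bcl_add [OF sg_bcl] bcl_scaleC [OF sg_bcl]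
          cinner_add_left cinner_scaleC_left)
  qed
  show "\<forall>F\<in>range Phi. \<forall>G\<in>range Phi. Kform g P F G = cnj (Kform g P G F)"
  proof (intro ballI)
    fix F G assume "F \<in> range Phi" "G \<in> range Phi"
    then obtain f h where F: "F = Phi f" and G: "G = Phi h" by blast
    show "Kform g P F G = cnj (Kform g P G F)" unfolding F G Kform_Phi
      by (metis cinner_commute selfadjointD [OF sg_sa])
  qed
  show "\<exists>Vp Vm. fun_csubspace Vp \<and> fun_csubspace Vm \<and> Vp \<subseteq> range Phi \<and> Vm \<subseteq> range Phi \<and>
        Vp \<inter> Vm = {\<lambda>z. 0} \<and> (\<forall>F\<in>range Phi. \<exists>Fp\<in>Vp. \<exists>Fm\<in>Vm. F = (\<lambda>z. Fp z + Fm z)) \<and>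
        (\<forall>Fp\<in>Vp. \<forall>Fm\<in>Vm. Kform g P Fp Fm = 0) \<and> fun_hilbert Vp (Kform g P) \<and>
        fun_hilbert Vm (\<lambda>F G. - Kform g P F G)"
  proof (intro exI conjI)
    show "fun_csubspace (Phi ` range Ep)" by (rule csub_image [OF Ep_bcl])
    show "fun_csubspace (Phi ` range Em)" by (rule csub_image [OF Em_bcl])
    show "Phi ` range Ep \<subseteq> range Phi" by auto
    show "Phi ` range Em \<subseteq> range Phi" by auto
    show "Phi ` range Ep \<inter> Phi ` range Em = {\<lambda>z. 0}"
    proof
      show "Phi ` range Ep \<inter> Phi ` range Em \<subseteq> {\<lambda>z. 0}"
      proof
        fix F assume "F \<in> Phi ` range Ep \<inter> Phi ` range Em"
        then obtain a b where Fa: "F = Phi (Ep a)" and Fb: "F = Phi (Em b)" by blast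
        then have "P (Ep a - Em b) = 0" using Phi_eq_iff by metis
        then have "Ep (Ep a - Em b) = 0" using Ep_zero_iff ker_Pp_of_P by blast
        then have "Ep a = 0" by (simp add: bcl_diff [OF Ep_bcl] Ep_idem Ep_Em)
        then show "F \<in> {\<lambda>z. 0}" using Fa Phi_zero by simp
      qed
      show "{\<lambda>z. 0} \<subseteq> Phi ` range Ep \<inter> Phi ` range Em"
        using Phi_zero bcl_zero [OF Ep_bcl] bcl_zero [OF Em_bcl] by (metis Int_iff empty_subsetI insert_subset rangeI image_eqI)
    qed
    show "\<forall>F\<in>range Phi. \<exists>Fp\<in>Phi ` range Ep. \<exists>Fm\<in>Phi ` range Em. F = (\<lambda>z. Fp z + Fm z)"
    proof
      fix F assume "F \<in> range Phi"
      then obtain f where F: "F = Phi f" by blast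
      have "Phi f = Phi (Ep f + Em f)" unfolding Phi_eq_iff by (simp add: bcl_diff [OF bcP] P_EpEm)
      then have "F = (\<lambda>z. Phi (Ep f) z + Phi (Em f) z)" unfolding F by (simp add: Phi_add)
      then show "\<exists>Fp\<in>Phi ` range Ep. \<exists>Fm\<in>Phi ` range Em. F = (\<lambda>z. Fp z + Fm z)" by blast
    qed
    show "\<forall>Fp\<in>Phi ` range Ep. \<forall>Fm\<in>Phi ` range Em. Kform g P Fp Fm = 0"
    proof (intro ballI)
      fix Fp Fm assume "Fp \<in> Phi ` range Ep" "Fm \<in> Phi ` range Em"
      then obtain a b where Fp: "Fp = Phi (Ep a)" and Fm: "Fm = Phi (Em b)" by blast
      have "cinner (Ep a) (Em b) = cinner (Em (Ep a)) b" by (simp add: selfadjointD [OF Em_sa])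
      then show "Kform g P Fp Fm = 0" unfolding Fp Fm Kform_Phi sg_Ep by (simp add: Em_Ep)
    qed
    show "fun_hilbert (Phi ` range Ep) (Kform g P)"
      by (rule hilbert_part [OF Ep_bcl Ep_idem Kform_Ep])
    show "fun_hilbert (Phi ` range Em) (\<lambda>F G. - Kform g P F G)"
      by (rule hilbert_part [OF Em_bcl Em_idem Kform_Em])
  qed
qed

lemma kernel_in: "hat g (P (g w \<xi>)) = Phi (sg (R (g w \<xi>)))"
proof -
  have "R (sg (R y)) = P y" for y by (simp only: R_sg R_sq sg_Ab)
  then show ?thesis unfolding Phi_def by simp
qed

lemma reproducing: "Kform g P (Phi f) (hat g (P (g w \<xi>))) = cinner (Phi f w) \<xi>"
proof -
  have e: "R (Ep f + Em f) = R f"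
  proof -
    have "P (Ep f + Em f - f) = 0" by (simp add: bcl_diff [OF bcP] P_EpEm)
    then have "R (Ep f + Em f - f) = 0" using ker_R by simp
    then show ?thesis by (simp add: bcl_diff [OF R_bcl])
  qed
  have "Kform g P (Phi f) (hat g (P (g w \<xi>))) = cinner (sg f) (sg (R (g w \<xi>)))"
    unfolding kernel_in Kform_Phi ..
  also have "\<dots> = cinner (sg (sg f)) (R (g w \<xi>))" by (simp add: selfadjointD [OF sg_sa])
  also have "\<dots> = cinner (R (Ep f + Em f)) (g w \<xi>)" by (simp add: sg_sg selfadjointD [OF R_sa])
  also have "\<dots> = cinner (Phi f w) \<xi>" unfolding e Phi_def by (simp add: hatc)
  finally show ?thesis .
qed

theorem rk: "rk_krein_space (hatspace g P) (Kform g P) (\<lambda>z w \<xi>. hat g (P (g w \<xi>)) z)"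
  unfolding rk_krein_space_def
proof (intro conjI allI ballI krein)
  fix z w show "bounded_clinear (\<lambda>\<xi>. hat g (P (g w \<xi>)) z)" by (rule hat_kernel_bcl [OF bcP])
next
  fix w \<xi>
  show "(\<lambda>z. hat g (P (g w \<xi>)) z) \<in> hatspace g P" unfolding hatspace_eq kernel_in by simp
next
  fix w \<xi> F assume "F \<in> hatspace g P"
  then obtain f where F: "F = Phi f" unfolding hatspace_eq by blast
  show "Kform g P F (\<lambda>z. hat g (P (g w \<xi>)) z) = cinner (F w) \<xi>" unfolding F using reproducing by simp
qed

end

theorem proposition2p3:
  fixes P :: "'h::chilbert_space \<Rightarrow> 'h"
    and g :: "'z \<Rightarrow> 'c::chilbert_space \<Rightarrow> 'h"
  assumes "selfadjoint P"
    and "\<forall>z. bounded_clinear (g z)"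
    and "closure (cspan (\<Union>z. range (g z))) = UNIV"
  shows "rk_krein_space (hatspace g P) (Kform g P) (\<lambda>z w \<xi>. hat g (P (g w \<xi>)) z)"
proof -
  interpret m: main_loc P g
    using assms by unfold_locales auto
  show ?thesis by (rule m.rk)
qed


end
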